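(* For all $0<d<2$ and $0\le t\le1$, the operator $\mathrm{LL}^{\otimes}_{d,t}$ maps $\mathcal W_2(\mathbb{R}^2)$ into itself and is a contraction on the metric space $(\mathcal W_2(\mathbb{R}^2),W_2)$. That is, there is $c<1$ such that $$W_2\big(\mathrm{LL}^{\otimes}_{d,t}(\rho),\mathrm{LL}^{\otimes}_{d,t}(\nu)\big)\le c\,W_2(\rho,\nu)\quad\text{for all }\rho,\nu\in\mathcal W_2(\mathbb{R}^2).$$
   Context: $\mathcal W_2(\mathbb{R}^2)$ is the set of probability measures $\rho$ on $\mathbb{R}^2$ with $\int\|x\|_2^2\,\mathrm{d}\rho<\infty$. $W_2(\rho,\nu)=\inf\mathbb{E}[\|X-X'\|_2^2]^{1/2}$, where the infimum is over couplings with $X\sim\rho$ and $X'\sim\nu$. For a probability measure $\rho$ on $\mathbb{R}^2$, $\mathrm{LL}^{\otimes}_{d,t}(\rho)$ is the law of $$\Big(\sum_{i\le D}s_i\log\tfrac{1+r_i\tanh(\xi_{i,1}/2)}2+\sum_{i\le D'}s'_i\log\tfrac{1+r'_i\tanh(\xi'_{i,1}/2)}2,\ \ \sum_{i\le D}s_i\log\tfrac{1+r_i\tanh(\xi_{i,2}/2)}2+\sum_{i\le D''}s''_i\log\tfrac{1+r''_i\tanh(\xi''_{i,2}/2)}2\Big),$$ where $\xi_i=(\xi_{i,1},\xi_{i,2})$, $\xi'_i$, $\xi''_i$ ($i\ge1$) have law $\rho$, $D\sim\mathrm{Po}(td)$, $D',D''\sim\mathrm{Po}((1-t)d)$, and $s_i,s'_i,s''_i,r_i,r'_i,r''_i$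 are uniform on $\{\pm1\}$, all mutually independent. *)

theory Defs
  imports "HOL-Probability.Probability"
begin

type_synonym pt = "real \<times> real"

definition Po :: "real \<Rightarrow> nat pmf" where
  "Po lam = (if lam = 0 then return_pmf 0 else poisson_pmf lam)"

definition unif_sign :: "real measure" where
  "unif_sign = measure_pmf (pmf_of_set {-1, 1})"

definition LLterm :: "real \<Rightarrow> real \<Rightarrow> real \<Rightarrow> real" where
  "LLterm s r x = s * ln ((1 + r * tanh (x / 2)) / 2)"

definition term_law :: "(real \<Rightarrow> real \<Rightarrow> pt \<Rightarrow> pt) \<Rightarrow> pt measure \<Rightarrow> pt measure" where
  "term_law g rho = distr (rho \<Otimes>\<^sub>M (unif_sign \<Otimes>\<^sub>M unif_sign)) borel
      (\<lambda>(x, (s, r)). g s r x)"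

definition both_coords :: "real \<Rightarrow> real \<Rightarrow> pt \<Rightarrow> pt" where
  "both_coords s r x = (LLterm s r (fst x), LLterm s r (snd x))"

definition first_coord :: "real \<Rightarrow> real \<Rightarrow> pt \<Rightarrow> pt" where
  "first_coord s r x = (LLterm s r (fst x), 0)"

definition second_coord :: "real \<Rightarrow> real \<Rightarrow> pt \<Rightarrow> pt" where
  "second_coord s r x = (0, LLterm s r (snd x))"

definition compound_Po :: "real \<Rightarrow> pt measure \<Rightarrow> pt measure" where
  "compound_Po lam mu = measure_pmf (Po lam) \<bind>
      (\<lambda>n. distr (PiM {..<n} (\<lambda>_. mu)) borel (\<lambda>y. \<Sum>i<n. y i))"

definition LL :: "real \<Rightarrow> real \<Rightarrow> pt measure \<Rightarrow> pt measure" where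
  "LL d t rho = distr
      (compound_Po (t * d) (term_law both_coords rho) \<Otimes>\<^sub>M
       (compound_Po ((1 - t) * d) (term_law first_coord rho) \<Otimes>\<^sub>M
        compound_Po ((1 - t) * d) (term_law second_coord rho)))
      borel (\<lambda>(a, (b, c)). a + b + c)"

definition W2space :: "pt measure set" where
  "W2space = {rho. sets rho = sets borel \<and> prob_space rho \<and>
      (\<integral>\<^sup>+ x. ennreal ((norm x)\<^sup>2) \<partial>rho) < \<infinity>}"

definition couplings :: "pt measure \<Rightarrow> pt measure \<Rightarrow> (pt \<times> pt) measure set" where
  "couplings rho nu = {C. sets C = sets borel \<and> prob_space C \<and>
      distr C borel fst = rho \<and> distr C borel snd = nu}"

definition W2sq :: "pt measure \<Rightarrow> pt measure \<Rightarrow> ennreal" where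
  "W2sq rho nu = (INF C \<in> couplings rho nu. \<integral>\<^sup>+ p. ennreal ((dist (fst p) (snd p))\<^sup>2) \<partial>C)"

definition W2 :: "pt measure \<Rightarrow> pt measure \<Rightarrow> real" where
  "W2 rho nu = sqrt (enn2real (W2sq rho nu))"

end

theory Submission
  imports Defs
begin

definition tlaw :: "(real \<Rightarrow> real \<Rightarrow> 'a \<Rightarrow> 'b::euclidean_space) \<Rightarrow> 'a measure \<Rightarrow> 'b measure" where
  "tlaw g M = distr (M \<Otimes>\<^sub>M (unif_sign \<Otimes>\<^sub>M unif_sign)) borel (\<lambda>(x, (s, r)). g s r x)"

definition cpo :: "real \<Rightarrow> 'a::euclidean_space measure \<Rightarrow> 'a measure" where
  "cpo lam mu = measure_pmf (Po lam) \<bind>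
      (\<lambda>n. distr (PiM {..<n} (\<lambda>_. mu)) borel (\<lambda>y. \<Sum>i<n. y i))"

definition LLg :: "'a::euclidean_space measure \<Rightarrow> 'a measure \<Rightarrow> 'a measure \<Rightarrow> 'a measure" where
  "LLg A B C = distr (A \<Otimes>\<^sub>M (B \<Otimes>\<^sub>M C)) borel (\<lambda>(a, (b, c)). a + b + c)"

lemma LL_eq: "LL d t rho = LLg (cpo (t*d) (tlaw both_coords rho))
   (cpo ((1-t)*d) (tlaw first_coord rho)) (cpo ((1-t)*d) (tlaw second_coord rho))"
  by (simp add: LL_def LLg_def cpo_def compound_Po_def term_law_def tlaw_def)

lemma sets_unif [simp]: "sets unif_sign = sets (count_space UNIV)"
  by (simp add: unif_sign_def)
lemma space_unif [simp]: "space unif_sign = UNIV"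
  by (simp add: unif_sign_def)
lemma prob_unif: "prob_space unif_sign"
  by (simp add: unif_sign_def measure_pmf.prob_space_axioms)

lemma nn_integral_unif: "(\<integral>\<^sup>+x. f x \<partial>unif_sign) = (f (-1) + f 1) / 2"
proof -
  have "(\<integral>\<^sup>+x. f x \<partial>unif_sign) = (\<Sum>x\<in>{-1,1::real}. f x * ennreal (pmf (pmf_of_set {-1,1::real}) x))"
    unfolding unif_sign_def by (subst nn_integral_measure_pmf_finite) auto
  also have "\<dots> = (f (-1) + f 1) / 2"
    by (simp add: ennreal_divide_times divide_ennreal_def ring_distribs)
  finally show ?thesis .
qed

lemma distr_unif_neg: "distr unif_sign (count_space UNIV) uminus = unif_sign"
proof -
  have "distr unif_sign (count_space UNIV) uminus = measure_pmf (map_pmf uminus (pmf_of_set {-1,1::real}))"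
    unfolding unif_sign_def by (simp add: map_pmf_rep_eq)
  also have "map_pmf uminus (pmf_of_set {-1,1::real}) = pmf_of_set {-1,1}"
    by (subst map_pmf_of_set_inj) (auto simp: inj_on_def insert_commute)
  finally show ?thesis by (simp add: unif_sign_def)
qed

lemma quarter_ennreal: "((a + b)/2 + (c+d)/2)/2 = (a+b+c+d)/(4::ennreal)"
proof -
  have "inverse (2::ennreal) * inverse 2 = inverse (2*2)"
    by (rule ennreal_inverse_mult[symmetric]) auto
  then have i: "inverse (2::ennreal) * inverse 2 = inverse 4" by simp
  show ?thesis unfolding divide_ennreal_def
    by (simp only: distrib_right mult.assoc i add.assoc)
qed

abbreviation "UU \<equiv> unif_sign \<Otimes>\<^sub>M unif_sign"

lemma sets_UU: "sets UU = sets (count_space UNIV \<Otimes>\<^sub>M count_space UNIV)"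
  by (intro sets_pair_measure_cong) (auto simp: unif_sign_def)

lemma prob_UU: "prob_space UU"
  by (intro prob_space_pair prob_unif)

lemma meas_lift:
  fixes g :: "real \<Rightarrow> real \<Rightarrow> 'a::euclidean_space \<Rightarrow> 'b::euclidean_space"
  assumes sM: "sets M = sets (borel :: 'a::euclidean_space measure)"
    and g: "(\<lambda>(x, (s, r)). g s r x) \<in> borel_measurable (borel \<Otimes>\<^sub>M (count_space UNIV \<Otimes>\<^sub>M count_space UNIV))"
  shows "(\<lambda>(x, (s, r)). g s r x) \<in> borel_measurable (M \<Otimes>\<^sub>M UU)"
proof -
  have "sets (M \<Otimes>\<^sub>M UU) = sets (borel \<Otimes>\<^sub>M (count_space UNIV \<Otimes>\<^sub>M count_space UNIV))"
    by (intro sets_pair_measure_cong sM sets_UU)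
  then have "measurable (M \<Otimes>\<^sub>M UU) (borel :: 'b measure) = measurable (borel \<Otimes>\<^sub>M (count_space UNIV \<Otimes>\<^sub>M count_space UNIV)) borel"
    by (rule measurable_cong_sets) (rule refl)
  then show ?thesis using g by (simp only:)
qed

lemma tlaw_sets [simp]: "sets (tlaw g M) = sets borel"
  by (simp add: tlaw_def)

lemma tlaw_prob:
  fixes g :: "real \<Rightarrow> real \<Rightarrow> 'a::euclidean_space \<Rightarrow> 'b::euclidean_space"
  assumes "prob_space M" "sets M = sets (borel :: 'a::euclidean_space measure)"
    and g: "(\<lambda>(x, (s, r)). g s r x) \<in> borel_measurable (borel \<Otimes>\<^sub>M (count_space UNIV \<Otimes>\<^sub>M count_space UNIV))"
  shows "prob_space (tlaw g M)"
  unfolding tlaw_def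
proof (rule prob_space.prob_space_distr)
  show "prob_space (M \<Otimes>\<^sub>M UU)" by (intro prob_space_pair assms(1) prob_UU)
  show "(\<lambda>(x, y, z). g y z x) \<in> borel_measurable (M \<Otimes>\<^sub>M UU)"
    using meas_lift[OF assms(2) g] by simp
qed

lemma tlaw_nn:
  fixes g :: "real \<Rightarrow> real \<Rightarrow> 'a::euclidean_space \<Rightarrow> 'b::euclidean_space"
  assumes "sets M = sets (borel :: 'a::euclidean_space measure)"
    and g: "(\<lambda>(x, (s, r)). g s r x) \<in> borel_measurable (borel \<Otimes>\<^sub>M (count_space UNIV \<Otimes>\<^sub>M count_space UNIV))"
    and f: "f \<in> borel_measurable (borel :: 'b::euclidean_space measure)"
  shows "(\<integral>\<^sup>+y. f y \<partial>tlaw g M) = (\<integral>\<^sup>+x. (f (g (-1) (-1) x) + f (g (-1) 1 x) + f (g 1 (-1) x) + f (g 1 1 x)) / 4 \<partial>M)"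
proof -
  interpret U: prob_space unif_sign by (rule prob_unif)
  interpret UU: prob_space UU by (rule prob_UU)
  have m: "(\<lambda>(x, (s, r)). g s r x) \<in> borel_measurable (M \<Otimes>\<^sub>M UU)" by (rule meas_lift[OF assms(1) g])
  have "(\<integral>\<^sup>+y. f y \<partial>tlaw g M) = (\<integral>\<^sup>+p. f (case p of (x, (s, r)) \<Rightarrow> g s r x) \<partial>(M \<Otimes>\<^sub>M UU))"
    unfolding tlaw_def by (rule nn_integral_distr[OF m]) (use f in simp)
  also have "\<dots> = (\<integral>\<^sup>+x. \<integral>\<^sup>+sr. f (case (x, sr) of (x, (s, r)) \<Rightarrow> g s r x) \<partial>UU \<partial>M)"
    by (rule UU.nn_integral_fst[symmetric]) (rule measurable_compose[OF m f])
  also have "\<dots> = (\<integral>\<^sup>+x. (f (g (-1) (-1) x) + f (g (-1) 1 x) + f (g 1 (-1) x) + f (g 1 1 x)) / 4 \<partial>M)"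
  proof (rule nn_integral_cong)
    fix x assume x: "x \<in> space M"
    have mx: "(\<lambda>sr. f (case (x, sr) of (x, (s, r)) \<Rightarrow> g s r x)) \<in> borel_measurable UU"
      using measurable_compose[OF m f] x by measurable
    have "(\<integral>\<^sup>+sr. f (case (x, sr) of (x, (s, r)) \<Rightarrow> g s r x) \<partial>UU)
        = (\<integral>\<^sup>+s. \<integral>\<^sup>+r. f (g s r x) \<partial>unif_sign \<partial>unif_sign)"
      by (subst U.nn_integral_fst[symmetric]) (use mx in auto)
    also have "\<dots> = (f (g (-1) (-1) x) + f (g (-1) 1 x) + f (g 1 (-1) x) + f (g 1 1 x)) / 4"
      by (simp only: nn_integral_unif quarter_ennreal)
    finally show "(\<integral>\<^sup>+sr. f (case (x, sr) of (x, (s, r)) \<Rightarrow> g s r x) \<partial>UU) =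
      (f (g (-1) (-1) x) + f (g (-1) 1 x) + f (g 1 (-1) x) + f (g 1 1 x)) / 4" .
  qed
  finally show ?thesis .
qed

lemma meas_lift2:
  fixes g :: "real \<Rightarrow> real \<Rightarrow> 'a::euclidean_space \<Rightarrow> 'b::euclidean_space"
  assumes sN: "sets N = sets (borel \<Otimes>\<^sub>M (count_space UNIV \<Otimes>\<^sub>M count_space UNIV))"
    and g: "(\<lambda>(x, (s, r)). g s r x) \<in> borel_measurable (borel \<Otimes>\<^sub>M (count_space UNIV \<Otimes>\<^sub>M count_space UNIV))"
  shows "(\<lambda>(x, (s, r)). g s r x) \<in> borel_measurable N"
proof -
  have "measurable N (borel :: 'b measure) = measurable (borel \<Otimes>\<^sub>M (count_space UNIV \<Otimes>\<^sub>M count_space UNIV)) borel"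
    by (rule measurable_cong_sets[OF sN]) (rule refl)
  then show ?thesis using g by (simp only:)
qed

lemma sigma_finite_UU: "sigma_finite_measure UU"
  using prob_UU prob_space_imp_sigma_finite by blast

lemma tlaw_distr:
  fixes h :: "real \<Rightarrow> real \<Rightarrow> 'a::euclidean_space \<Rightarrow> 'b::euclidean_space"
    and g :: "real \<Rightarrow> real \<Rightarrow> 'c::euclidean_space \<Rightarrow> 'd::euclidean_space"
  assumes sM: "sets M = sets (borel :: 'a measure)"
    and h: "(\<lambda>(x, (s, r)). h s r x) \<in> borel_measurable (borel \<Otimes>\<^sub>M (count_space UNIV \<Otimes>\<^sub>M count_space UNIV))"
    and g: "(\<lambda>(x, (s, r)). g s r x) \<in> borel_measurable (borel \<Otimes>\<^sub>M (count_space UNIV \<Otimes>\<^sub>M count_space UNIV))"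
    and L: "L \<in> borel_measurable (borel :: 'b measure)"
    and P: "P \<in> borel_measurable (borel :: 'a measure)"
    and eq: "\<And>s r z. L (h s r z) = g s r (P z)"
  shows "distr (tlaw h M) borel L = tlaw g (distr M borel P)"
proof -
  have mh: "(\<lambda>(x, (s, r)). h s r x) \<in> borel_measurable (M \<Otimes>\<^sub>M UU)"
    by (rule meas_lift[OF sM h])
  have mg: "(\<lambda>(x, (s, r)). g s r x) \<in> borel_measurable (borel \<Otimes>\<^sub>M UU)"
    by (rule meas_lift[OF refl g])
  have P': "P \<in> measurable M borel" using P by (simp only: measurable_cong_sets[OF sM refl])
  have "distr (tlaw h M) borel L = distr (M \<Otimes>\<^sub>M UU) borel (L \<circ> (\<lambda>(x, (s, r)). h s r x))"
    unfolding tlaw_def by (rule distr_distr[OF L[unfolded measurable_cong_sets[OF sets_distr refl]] mh])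
  also have "\<dots> = distr (M \<Otimes>\<^sub>M UU) borel ((\<lambda>(x, (s, r)). g s r x) \<circ> (\<lambda>(x, y). (P x, y)))"
    by (rule distr_cong) (auto simp: eq)
  also have "\<dots> = distr (distr (M \<Otimes>\<^sub>M UU) (borel \<Otimes>\<^sub>M UU) (\<lambda>(x, y). (P x, y))) borel (\<lambda>(x, (s, r)). g s r x)"
  proof (rule distr_distr[symmetric, OF mg])
    show "(\<lambda>(x, y). (P x, y)) \<in> M \<Otimes>\<^sub>M UU \<rightarrow>\<^sub>M borel \<Otimes>\<^sub>M UU"
      using P' by measurable
  qed
  also have "distr (M \<Otimes>\<^sub>M UU) (borel \<Otimes>\<^sub>M UU) (\<lambda>(x, y). (P x, y)) = distr M borel P \<Otimes>\<^sub>M distr UU UU (\<lambda>x. x)"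
    by (rule pair_measure_distr[symmetric, OF P']) (auto simp: distr_id sigma_finite_UU)
  also have "distr UU UU (\<lambda>x. x) = UU" by (rule distr_id)
  finally show ?thesis unfolding tlaw_def .
qed

lemma tlaw_sym:
  fixes h :: "real \<Rightarrow> real \<Rightarrow> 'a::euclidean_space \<Rightarrow> 'b::euclidean_space"
  assumes sM: "sets M = sets (borel :: 'a measure)"
    and h: "(\<lambda>(x, (s, r)). h s r x) \<in> borel_measurable (borel \<Otimes>\<^sub>M (count_space UNIV \<Otimes>\<^sub>M count_space UNIV))"
    and eq: "\<And>s r z. h (-s) r z = - h s r z"
  shows "distr (tlaw h M) borel uminus = tlaw h M"
proof -
  have mh: "(\<lambda>(x, (s, r)). h s r x) \<in> borel_measurable (M \<Otimes>\<^sub>M UU)"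
    by (rule meas_lift[OF sM h])
  have sN: "sets (M \<Otimes>\<^sub>M (count_space UNIV \<Otimes>\<^sub>M unif_sign)) = sets (borel \<Otimes>\<^sub>M (count_space UNIV \<Otimes>\<^sub>M count_space UNIV))"
    by (intro sets_pair_measure_cong sM) auto
  have mh2: "(\<lambda>(x, (s, r)). h s r x) \<in> borel_measurable (M \<Otimes>\<^sub>M (count_space UNIV \<Otimes>\<^sub>M unif_sign))"
    by (rule meas_lift2[OF sN h])
  have um: "uminus \<in> borel_measurable (borel :: 'b measure)" by simp
  have um_U: "(uminus::real\<Rightarrow>real) \<in> unif_sign \<rightarrow>\<^sub>M count_space UNIV"
    by (simp add: measurable_cong_sets[OF sets_unif refl])
  have F0: "(\<lambda>p. (- fst p, snd p)) \<in> UU \<rightarrow>\<^sub>M count_space UNIV \<Otimes>\<^sub>M unif_sign"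
    by (intro measurable_Pair measurable_compose[OF measurable_fst um_U] measurable_snd)
  have "(\<lambda>(s::real, r::real). (-s, r)) = (\<lambda>p. (- fst p, snd p))" by auto
  with F0 have F1: "(\<lambda>(s::real, r::real). (-s, r)) \<in> UU \<rightarrow>\<^sub>M count_space UNIV \<Otimes>\<^sub>M unif_sign"
    by simp
  have F: "(\<lambda>(x, y). (x, (\<lambda>(s::real, r::real). (-s, r)) y)) \<in> M \<Otimes>\<^sub>M UU \<rightarrow>\<^sub>M M \<Otimes>\<^sub>M (count_space UNIV \<Otimes>\<^sub>M unif_sign)"
    using F1 by measurable
  have "UU = distr unif_sign (count_space UNIV) uminus \<Otimes>\<^sub>M distr unif_sign unif_sign (\<lambda>x. x)"
    by (simp add: distr_unif_neg distr_id)
  also have "\<dots> = distr UU (count_space UNIV \<Otimes>\<^sub>M unif_sign) (\<lambda>(s, r). (-s, r))"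
    by (rule pair_measure_distr[OF um_U]) (auto simp: distr_id prob_unif prob_space_imp_sigma_finite)
  finally have UUe: "UU = distr UU (count_space UNIV \<Otimes>\<^sub>M unif_sign) (\<lambda>(s::real, r::real). (-s, r))" .
  have "M \<Otimes>\<^sub>M UU = distr M M (\<lambda>x. x) \<Otimes>\<^sub>M distr UU (count_space UNIV \<Otimes>\<^sub>M unif_sign) (\<lambda>(s::real, r::real). (-s, r))"
    by (simp only: distr_id UUe[symmetric])
  also have "\<dots> = distr (M \<Otimes>\<^sub>M UU) (M \<Otimes>\<^sub>M (count_space UNIV \<Otimes>\<^sub>M unif_sign)) (\<lambda>(x, y). (x, (\<lambda>(s::real, r::real). (-s, r)) y))"
    by (rule pair_measure_distr[OF _ F1]) (simp_all only: UUe[symmetric] sigma_finite_UU measurable_ident_sets[OF refl])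
  finally have Me: "M \<Otimes>\<^sub>M UU = distr (M \<Otimes>\<^sub>M UU) (M \<Otimes>\<^sub>M (count_space UNIV \<Otimes>\<^sub>M unif_sign)) (\<lambda>(x, y). (x, (\<lambda>(s::real, r::real). (-s, r)) y))" .
  have "distr (tlaw h M) borel uminus = distr (M \<Otimes>\<^sub>M UU) borel (uminus \<circ> (\<lambda>(x, (s, r)). h s r x))"
    unfolding tlaw_def by (rule distr_distr[OF um[unfolded measurable_cong_sets[OF sets_distr refl]] mh])
  also have "\<dots> = distr (M \<Otimes>\<^sub>M UU) borel ((\<lambda>(x, (s, r)). h s r x) \<circ> (\<lambda>(x, y). (x, (\<lambda>(s::real, r::real). (-s, r)) y)))"
    by (rule distr_cong) (auto simp: eq)
  also have "\<dots> = distr (distr (M \<Otimes>\<^sub>M UU) (M \<Otimes>\<^sub>M (count_space UNIV \<Otimes>\<^sub>M unif_sign)) (\<lambda>(x, y). (x, (\<lambda>(s::real, r::real). (-s, r)) y))) borel (\<lambda>(x, (s, r)). h s r x)"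
    by (rule distr_distr[symmetric, OF mh2 F])
  also have "\<dots> = tlaw h M" unfolding tlaw_def by (simp only: Me[symmetric])
  finally show ?thesis .
qed

lemma onepexp [simp]: "0 < 1 + exp (x::real)" "1 + exp x \<noteq> 0" "exp x + 1 \<noteq> 0" "0 < exp x + 1"
proof -
  have "0 < exp x" by simp
  then show "0 < 1 + exp (x::real)" "1 + exp x \<noteq> 0" "exp x + 1 \<noteq> 0" "0 < exp x + 1" by linarith+
qed

lemma a1: assumes "(E::real) > 0" shows "(1 - 1/E)/(1 + 1/E) = (E-1)/(E+1)"
proof -
  have "1 - 1/E = (E-1)/E" "1 + 1/E = (E+1)/E" using assms by (simp_all add: field_simps)
  then show ?thesis using assms by simp
qed

lemma a2: assumes "(E::real) > 0" shows "(1 + (E-1)/(E+1))/2 = E/(1+E)"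
proof -
  have "E + 1 > 0" "1 + E > 0" using assms by simp_all
  with assms show ?thesis by (simp add: field_simps)
qed

lemma a3: assumes "(E::real) > 0" shows "(1 + (-1)*((E-1)/(E+1)))/2 = 1/(1+E)"
proof -
  have "E + 1 > 0" "1 + E > 0" using assms by simp_all
  with assms show ?thesis by (simp add: field_simps)
qed

lemma tanh_half: "tanh ((x::real) / 2) = (exp x - 1) / (exp x + 1)"
proof -
  have "tanh (x / 2) = (1 - exp (- x)) / (1 + exp (- x))" by (simp add: tanh_real_altdef)
  also have "\<dots> = (1 - 1 / exp x) / (1 + 1 / exp x)" by (simp add: exp_minus inverse_eq_divide)
  also have "\<dots> = (exp x - 1) / (exp x + 1)" by (rule a1) simp
  finally show ?thesis .
qed

lemma LL_pos: "LLterm 1 1 x = x - ln (1 + exp x)"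
proof -
  have h: "(1 + tanh (x / 2)) / 2 = exp x / (1 + exp x)"
    unfolding tanh_half by (rule a2) simp
  have "LLterm 1 1 x = ln ((1 + tanh (x / 2)) / 2)" unfolding LLterm_def by simp
  also have "\<dots> = ln (exp x / (1 + exp x))" by (simp only: h)
  also have "\<dots> = ln (exp x) - ln (1 + exp x)" by (rule ln_divide_pos) auto
  finally show ?thesis by simp
qed

lemma LL_neg: "LLterm 1 (-1) x = - ln (1 + exp x)"
proof -
  have h: "(1 + (-1) * tanh (x / 2)) / 2 = 1 / (1 + exp x)"
    unfolding tanh_half by (rule a3) simp
  have "LLterm 1 (-1) x = ln ((1 + (-1) * tanh (x / 2)) / 2)" unfolding LLterm_def by simp
  also have "\<dots> = ln (1 / (1 + exp x))" by (simp only: h)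
  also have "\<dots> = ln 1 - ln (1 + exp x)" by (rule ln_divide_pos) auto
  finally show ?thesis by simp
qed

lemma LL_s: "LLterm s r x = s * LLterm 1 r x"
  by (simp add: LLterm_def)

lemma softplus_lip:
  assumes "b \<le> (a::real)"
  shows "0 \<le> ln (1 + exp a) - ln (1 + exp b)" "ln (1 + exp a) - ln (1 + exp b) \<le> a - b"
proof -
  show "0 \<le> ln (1 + exp a) - ln (1 + exp b)"
    using assms by (simp add: add_pos_pos)
  have "1 + exp a \<le> exp (a - b) * (1 + exp b)"
  proof -
    have "1 \<le> exp (a - b)" using assms by simp
    then show ?thesis by (simp add: distrib_left exp_diff)
  qed
  moreover have "0 < 1 + exp a" "0 < exp (a - b) * (1 + exp b)" by (auto simp: add_pos_pos)
  ultimately have "ln (1 + exp a) \<le> ln (exp (a - b) * (1 + exp b))"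
    by (simp only: ln_le_cancel_iff)
  also have "\<dots> = ln (exp (a - b)) + ln (1 + exp b)"
    by (rule ln_mult_pos) auto
  also have "\<dots> = (a - b) + ln (1 + exp b)" by simp
  finally show "ln (1 + exp a) - ln (1 + exp b) \<le> a - b" by simp
qed

lemma key_ineq_le:
  assumes "b \<le> (a::real)"
  shows "(LLterm 1 1 a - LLterm 1 1 b)\<^sup>2 + (LLterm 1 (-1) a - LLterm 1 (-1) b)\<^sup>2 \<le> (a - b)\<^sup>2"
proof -
  define v where "v = ln (1 + exp a) - ln (1 + exp b)"
  define u where "u = a - b"
  have v0: "0 \<le> v" and vu: "v \<le> u" using softplus_lip[OF assms] by (auto simp: u_def v_def)
  have "(LLterm 1 1 a - LLterm 1 1 b)\<^sup>2 + (LLterm 1 (-1) a - LLterm 1 (-1) b)\<^sup>2 = (u - v)\<^sup>2 + v\<^sup>2"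
    by (simp add: LL_pos LL_neg u_def v_def power2_eq_square algebra_simps)
  also have "\<dots> = u\<^sup>2 + 2 * (v * (v - u))" by (simp add: power2_eq_square algebra_simps)
  also have "\<dots> \<le> u\<^sup>2" using mult_nonneg_nonpos[OF v0, of "v - u"] vu by simp
  finally show ?thesis by (simp add: u_def)
qed

lemma key_ineq:
  "(LLterm 1 1 a - LLterm 1 1 b)\<^sup>2 + (LLterm 1 (-1) a - LLterm 1 (-1) b)\<^sup>2 \<le> (a - b)\<^sup>2"
proof (cases "b \<le> a")
  case True then show ?thesis by (rule key_ineq_le)
next
  case False
  then have "(LLterm 1 1 b - LLterm 1 1 a)\<^sup>2 + (LLterm 1 (-1) b - LLterm 1 (-1) a)\<^sup>2 \<le> (b - a)\<^sup>2"
    by (intro key_ineq_le) simp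
  then show ?thesis by (simp add: power2_commute)
qed

lemma sq_s: "s \<in> {-1, 1} \<Longrightarrow> (s * (x::real))\<^sup>2 = x\<^sup>2"
  by (auto simp: power2_eq_square)

lemma key_avg:
  "((LLterm (-1) (-1) a - LLterm (-1) (-1) b)\<^sup>2 + (LLterm (-1) 1 a - LLterm (-1) 1 b)\<^sup>2
    + (LLterm 1 (-1) a - LLterm 1 (-1) b)\<^sup>2 + (LLterm 1 1 a - LLterm 1 1 b)\<^sup>2) / 4 \<le> (a - b)\<^sup>2 / 2"
proof -
  have "LLterm (-1) r a - LLterm (-1) r b = - (LLterm 1 r a - LLterm 1 r b)" for r
    by (simp add: LLterm_def)
  then have "(LLterm (-1) r a - LLterm (-1) r b)\<^sup>2 = (LLterm 1 r a - LLterm 1 r b)\<^sup>2" for r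
    by (simp only: power2_minus)
  then show ?thesis using key_ineq[of a b] by simp
qed

lemma sq_sum_le: "((u::real) + v)\<^sup>2 \<le> 2 * u\<^sup>2 + 2 * v\<^sup>2"
proof -
  have "0 \<le> (u - v)\<^sup>2" by simp
  then show ?thesis by (simp add: power2_eq_square algebra_simps)
qed

lemma LL1_bound: "(LLterm s r a)\<^sup>2 \<le> 2 * a\<^sup>2 + 2" if "s \<in> {-1,1}" "r \<in> {-1,1}"
proof -
  have l2: "ln 2 \<le> (1::real)" using ln_le_minus_one[of 2] by simp
  have l0: "LLterm 1 r 0 = - ln 2" using that by (auto simp: LLterm_def ln_div)
  have d1: "(LLterm 1 1 a - LLterm 1 1 0)\<^sup>2 \<le> a\<^sup>2" "(LLterm 1 (-1) a - LLterm 1 (-1) 0)\<^sup>2 \<le> a\<^sup>2"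
    using key_ineq[of a 0, simplified] zero_le_power2[of "LLterm 1 1 a - LLterm 1 1 0"]
      zero_le_power2[of "LLterm 1 (-1) a - LLterm 1 (-1) 0"] by linarith+
  have d: "(LLterm 1 r a - LLterm 1 r 0)\<^sup>2 \<le> a\<^sup>2"
    using d1 that by auto
  have "(LLterm s r a)\<^sup>2 = (LLterm 1 r a)\<^sup>2" using that by (auto simp: LLterm_def power2_eq_square)
  also have "\<dots> = ((LLterm 1 r a - LLterm 1 r 0) + LLterm 1 r 0)\<^sup>2" by simp
  also have "\<dots> \<le> 2 * (LLterm 1 r a - LLterm 1 r 0)\<^sup>2 + 2 * (LLterm 1 r 0)\<^sup>2"
    by (rule sq_sum_le)
  also have "\<dots> \<le> 2 * a\<^sup>2 + 2"
  proof -
    have "(LLterm 1 r 0)\<^sup>2 \<le> 1" unfolding l0 using l2 ln_ge_zero[of 2]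
      by (simp add: power2_eq_square) (metis mult_le_one ln_ge_zero one_le_numeral)
    then show ?thesis using d by simp
  qed
  finally show ?thesis .
qed

definition Kn :: "'a::euclidean_space measure \<Rightarrow> nat \<Rightarrow> 'a measure" where
  "Kn mu n = distr (PiM {..<n} (\<lambda>_. mu)) borel (\<lambda>y. \<Sum>i<n. y i)"

lemma cpo_Kn: "cpo l mu = measure_pmf (Po l) \<bind> Kn mu"
  by (simp add: cpo_def Kn_def[abs_def])

lemma Kn_sets [simp]: "sets (Kn mu n) = sets borel"
  by (simp add: Kn_def)

lemma sum_meas:
  assumes sM: "sets mu = sets (borel :: 'a::euclidean_space measure)"
  shows "(\<lambda>y. \<Sum>i<n. y i) \<in> borel_measurable (PiM {..<n} (\<lambda>_. mu))"
proof -
  have "sets (PiM {..<n} (\<lambda>_. mu)) = sets (PiM {..<n} (\<lambda>_. (borel :: 'a measure)))"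
    by (intro sets_PiM_cong) (auto simp: sM)
  then have e: "measurable (PiM {..<n} (\<lambda>_. mu)) (borel :: 'a measure) = measurable (PiM {..<n} (\<lambda>_. (borel :: 'a measure))) borel"
    by (rule measurable_cong_sets) (rule refl)
  have "(\<lambda>y. \<Sum>i<n. y i) \<in> borel_measurable (PiM {..<n} (\<lambda>_. (borel :: 'a measure)))"
    by measurable
  then show ?thesis by (simp only: e)
qed

lemma Kn_prob:
  assumes "prob_space mu" "sets mu = sets (borel :: 'a::euclidean_space measure)"
  shows "prob_space (Kn mu n)"
  unfolding Kn_def
  by (rule prob_space.prob_space_distr[OF _ sum_meas[OF assms(2)]])
     (intro prob_space_PiM, use assms(1) in auto)

lemma Kn_meas:
  assumes "prob_space mu" "sets mu = sets (borel :: 'a::euclidean_space measure)"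
  shows "Kn mu \<in> measurable (measure_pmf p) (subprob_algebra borel)"
proof -
  have e: "measurable (measure_pmf p) (subprob_algebra (borel :: 'a measure)) = measurable (count_space UNIV) (subprob_algebra borel)"
    by (rule measurable_cong_sets) auto
  show ?thesis unfolding e using Kn_prob[OF assms]
    by (auto simp: space_subprob_algebra prob_space_imp_subprob_space)
qed

lemma cpo_sets [simp]: "sets (cpo l mu) = sets borel"
  unfolding cpo_Kn by (subst sets_bind) (auto simp: set_pmf_not_empty)

lemma cpo_prob:
  assumes "prob_space mu" "sets mu = sets (borel :: 'a::euclidean_space measure)"
  shows "prob_space (cpo l mu)"
  unfolding cpo_Kn
  by (rule measure_pmf.prob_space_bind[OF _ Kn_meas[OF assms]]) (auto intro: Kn_prob[OF assms])

lemma cpo_nn: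
  assumes "prob_space mu" "sets mu = sets (borel :: 'a::euclidean_space measure)"
    and f: "f \<in> borel_measurable borel"
  shows "(\<integral>\<^sup>+x. f x \<partial>cpo l mu) = (\<integral>\<^sup>+n. (\<integral>\<^sup>+x. f x \<partial>Kn mu n) \<partial>measure_pmf (Po l))"
  unfolding cpo_Kn by (rule nn_integral_bind[OF f Kn_meas[OF assms(1,2)]])

lemma Kn_distr:
  fixes L :: "'a::euclidean_space \<Rightarrow> 'b::euclidean_space"
  assumes pm: "prob_space mu" and sM: "sets mu = sets (borel :: 'a measure)"
    and Lm: "L \<in> borel_measurable borel" and lin: "linear L"
  shows "distr (Kn mu n) borel L = Kn (distr mu borel L) n"
proof -
  define I where "I = {..<n}"
  define nu where "nu = distr mu borel L"
  have snu: "sets nu = sets (borel :: 'b measure)" by (simp add: nu_def)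
  have pnu: "prob_space nu" unfolding nu_def
    by (rule prob_space.prob_space_distr[OF pm]) (simp only: measurable_cong_sets[OF sM refl] Lm)
  have Lmn: "L \<in> measurable mu nu"
    using Lm by (simp only: measurable_cong_sets[OF sM snu])
  have "distr (Kn mu n) borel L = distr (PiM I (\<lambda>_. mu)) borel (L \<circ> (\<lambda>y. \<Sum>i<n. y i))"
    unfolding Kn_def I_def by (rule distr_distr[OF Lm sum_meas[OF sM]])
  also have "\<dots> = distr (PiM I (\<lambda>_. mu)) borel ((\<lambda>y. \<Sum>i<n. y i) \<circ> compose I L)"
    by (rule distr_cong) (auto simp: compose_def linear_sum[OF lin] I_def)
  also have "\<dots> = distr (distr (PiM I (\<lambda>_. mu)) (PiM I (\<lambda>_. nu)) (compose I L)) borel (\<lambda>y. \<Sum>i<n. y i)"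
  proof (rule distr_distr[symmetric])
    show "(\<lambda>y. \<Sum>i<n. y i) \<in> borel_measurable (PiM I (\<lambda>_. nu))"
      unfolding I_def by (rule sum_meas[OF snu])
    show "compose I L \<in> PiM I (\<lambda>_. mu) \<rightarrow>\<^sub>M PiM I (\<lambda>_. nu)"
      unfolding compose_def
    proof (rule measurable_restrict)
      fix i assume "i \<in> I"
      show "(\<lambda>x. L (x i)) \<in> PiM I (\<lambda>_. mu) \<rightarrow>\<^sub>M nu"
        by (rule measurable_compose[OF measurable_component_singleton[of i I "\<lambda>_. mu"] Lmn]) fact
    qed
  qed
  also have "distr (PiM I (\<lambda>_. mu)) (PiM I (\<lambda>_. nu)) (compose I L) = PiM I (\<lambda>_. distr mu nu L)"
    by (rule distr_PiM_finite_prob_space') (auto simp: I_def pm pnu Lmn)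
  also have "distr mu nu L = nu"
    unfolding nu_def by (rule distr_cong) (auto simp: nu_def)
  finally show ?thesis unfolding Kn_def I_def nu_def .
qed

lemma cpo_distr:
  fixes L :: "'a::euclidean_space \<Rightarrow> 'b::euclidean_space"
  assumes pm: "prob_space mu" and sM: "sets mu = sets (borel :: 'a measure)"
    and Lm: "L \<in> borel_measurable borel" and lin: "linear L"
  shows "distr (cpo l mu) borel L = cpo l (distr mu borel L)"
proof -
  have "distr (cpo l mu) borel L = measure_pmf (Po l) \<bind> (\<lambda>n. distr (Kn mu n) borel L)"
    unfolding cpo_Kn by (rule distr_bind[OF Kn_meas[OF pm sM] _ Lm]) (simp add: set_pmf_not_empty)
  also have "\<dots> = measure_pmf (Po l) \<bind> Kn (distr mu borel L)"
    by (simp add: Kn_distr[OF pm sM Lm lin])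
  finally show ?thesis by (simp add: cpo_Kn)
qed

lemma two_cancel: assumes "2 * (x::ennreal) = 2 * y" shows "x = y"
proof -
  have "x = (x * 2) / 2" by (rule ennreal_mult_divide_eq[symmetric]) auto
  also have "\<dots> = (y * 2) / 2" using assms by (simp add: mult.commute)
  also have "\<dots> = y" by (rule ennreal_mult_divide_eq) auto
  finally show ?thesis .
qed

definition quadf :: "('a::real_vector \<Rightarrow> real) \<Rightarrow> bool" where
  "quadf q \<longleftrightarrow> (\<forall>x. 0 \<le> q x) \<and> (\<forall>a b. q (a + b) + q (a - b) = 2 * q a + 2 * q b)"

lemma inner_sym:
  fixes q :: "'a::euclidean_space \<Rightarrow> real"
  assumes pm: "prob_space mu" and sM: "sets mu = sets (borel :: 'a measure)"
    and sym: "distr mu borel uminus = mu"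
    and qq: "quadf q" and qm: "q \<in> borel_measurable borel"
  shows "(\<integral>\<^sup>+y. ennreal (q (a + y)) \<partial>mu) = ennreal (q a) + (\<integral>\<^sup>+y. ennreal (q y) \<partial>mu)"
proof -
  interpret prob_space mu by (rule pm)
  have e: "measurable mu (borel :: real measure) = measurable borel borel"
    by (rule measurable_cong_sets[OF sM]) (rule refl)
  have e2: "measurable mu (borel :: ennreal measure) = measurable borel borel"
    by (rule measurable_cong_sets[OF sM]) (rule refl)
  have m1: "(\<lambda>y. ennreal (q (a + y))) \<in> borel_measurable mu"
    unfolding e2 using qm by measurable
  have m2: "(\<lambda>y. ennreal (q (a - y))) \<in> borel_measurable mu"
    unfolding e2 using qm by measurable
  have m3: "(\<lambda>y. ennreal (q y)) \<in> borel_measurable mu"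
    unfolding e2 using qm by measurable
  have um: "uminus \<in> measurable mu (borel :: 'a measure)"
    by (simp only: measurable_cong_sets[OF sM refl]) simp
  have "(\<integral>\<^sup>+y. ennreal (q (a + y)) \<partial>mu) = (\<integral>\<^sup>+y. ennreal (q (a + y)) \<partial>distr mu borel uminus)"
    by (simp only: sym)
  also have "\<dots> = (\<integral>\<^sup>+y. ennreal (q (a - y)) \<partial>mu)"
    by (subst nn_integral_distr[OF um]) (use qm in simp_all)
  finally have e1: "(\<integral>\<^sup>+y. ennreal (q (a + y)) \<partial>mu) = (\<integral>\<^sup>+y. ennreal (q (a - y)) \<partial>mu)" .
  have q0: "\<And>x. 0 \<le> q x" using qq by (simp add: quadf_def)
  have "2 * (\<integral>\<^sup>+y. ennreal (q (a + y)) \<partial>mu) = (\<integral>\<^sup>+y. ennreal (q (a + y)) \<partial>mu) + (\<integral>\<^sup>+y. ennreal (q (a - y)) \<partial>mu)"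
    by (simp add: e1 mult_2)
  also have "\<dots> = (\<integral>\<^sup>+y. ennreal (q (a + y)) + ennreal (q (a - y)) \<partial>mu)"
    by (rule nn_integral_add[symmetric, OF m1 m2])
  also have "\<dots> = (\<integral>\<^sup>+y. 2 * ennreal (q a) + 2 * ennreal (q y) \<partial>mu)"
  proof (rule nn_integral_cong)
    fix y
    have "q (a + y) + q (a - y) = 2 * q a + 2 * q y" using qq by (simp add: quadf_def)
    have "ennreal (q (a + y)) + ennreal (q (a - y)) = ennreal (q (a + y) + q (a - y))"
      using q0 by (simp add: ennreal_plus)
    also have "\<dots> = ennreal (2 * q a) + ennreal (2 * q y)"
      using q0 \<open>q (a + y) + q (a - y) = 2 * q a + 2 * q y\<close> by (simp add: ennreal_plus)
    also have "\<dots> = 2 * ennreal (q a) + 2 * ennreal (q y)"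
      using q0 by (simp add: ennreal_mult)
    finally show "ennreal (q (a + y)) + ennreal (q (a - y)) = 2 * ennreal (q a) + 2 * ennreal (q y)" .
  qed
  also have "\<dots> = 2 * ennreal (q a) + 2 * (\<integral>\<^sup>+y. ennreal (q y) \<partial>mu)"
    using m3 by (simp add: nn_integral_add nn_integral_cmult emeasure_space_1)
  also have "\<dots> = 2 * (ennreal (q a) + (\<integral>\<^sup>+y. ennreal (q y) \<partial>mu))"
    by (simp add: distrib_left)
  finally show ?thesis by (rule two_cancel)
qed

lemma quadf_0: assumes "quadf q" shows "q 0 = 0"
proof -
  from assms have "q (0 + 0) + q (0 - 0) = 2 * q 0 + 2 * q 0" unfolding quadf_def by blast
  then show ?thesis by simp
qed

lemma Kn_nn:
  fixes q :: "'a::euclidean_space \<Rightarrow> real"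
  assumes pm: "prob_space mu" and sM: "sets mu = sets (borel :: 'a measure)"
    and sym: "distr mu borel uminus = mu"
    and qq: "quadf q" and qm: "q \<in> borel_measurable borel"
  shows "(\<integral>\<^sup>+x. ennreal (q x) \<partial>Kn mu n) = of_nat n * (\<integral>\<^sup>+y. ennreal (q y) \<partial>mu)"
proof -
  interpret product_sigma_finite "\<lambda>_. mu"
    by (simp add: product_sigma_finite_def pm prob_space_imp_sigma_finite)
  have qe: "(\<lambda>x. ennreal (q x)) \<in> borel_measurable borel" using qm by measurable
  have base: "(\<integral>\<^sup>+x. ennreal (q x) \<partial>Kn mu n) = (\<integral>\<^sup>+y. ennreal (q (\<Sum>i<n. y i)) \<partial>PiM {..<n} (\<lambda>_. mu))" for n
    unfolding Kn_def by (rule nn_integral_distr[OF sum_meas[OF sM]]) (use qe in simp)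
  have "(\<integral>\<^sup>+y. ennreal (q (\<Sum>i<n. y i)) \<partial>PiM {..<n} (\<lambda>_. mu)) = of_nat n * (\<integral>\<^sup>+y. ennreal (q y) \<partial>mu)"
  proof (induction n)
    case 0
    then show ?case by (simp add: quadf_0[OF qq])
  next
    case (Suc n)
    have fm: "(\<lambda>y. ennreal (q (\<Sum>i\<in>insert n {..<n}. y i))) \<in> borel_measurable (PiM (insert n {..<n}) (\<lambda>_. mu))"
      using measurable_compose[OF sum_meas[OF sM, of "Suc n"] qe] unfolding lessThan_Suc .
    have "(\<integral>\<^sup>+y. ennreal (q (\<Sum>i<Suc n. y i)) \<partial>PiM {..<Suc n} (\<lambda>_. mu))
        = (\<integral>\<^sup>+x. (\<integral>\<^sup>+y. ennreal (q (\<Sum>i<Suc n. (x(n := y)) i)) \<partial>mu) \<partial>PiM {..<n} (\<lambda>_. mu))"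
      unfolding lessThan_Suc by (rule product_nn_integral_insert[OF _ _ fm]) auto
    also have "\<dots> = (\<integral>\<^sup>+x. (\<integral>\<^sup>+y. ennreal (q ((\<Sum>i<n. x i) + y)) \<partial>mu) \<partial>PiM {..<n} (\<lambda>_. mu))"
      by (intro nn_integral_cong) (simp add: add.commute)
    also have "\<dots> = (\<integral>\<^sup>+x. ennreal (q (\<Sum>i<n. x i)) + (\<integral>\<^sup>+y. ennreal (q y) \<partial>mu) \<partial>PiM {..<n} (\<lambda>_. mu))"
      by (intro nn_integral_cong inner_sym[OF pm sM sym qq qm])
    also have "\<dots> = (\<integral>\<^sup>+x. ennreal (q (\<Sum>i<n. x i)) \<partial>PiM {..<n} (\<lambda>_. mu)) + (\<integral>\<^sup>+y. ennreal (q y) \<partial>mu)"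
    proof -
      interpret P: prob_space "PiM {..<n} (\<lambda>_. mu)" by (intro prob_space_PiM) (auto simp: pm)
      show ?thesis
        using measurable_compose[OF sum_meas[OF sM, of n] qe]
        by (simp add: nn_integral_add P.emeasure_space_1)
    qed
    also have "\<dots> = of_nat (Suc n) * (\<integral>\<^sup>+y. ennreal (q y) \<partial>mu)"
      by (simp add: Suc.IH distrib_right)
    finally show ?case .
  qed
  then show ?thesis by (simp add: base)
qed

lemma pois_sums:
  assumes "0 < l"
  shows "(\<lambda>n. real n * pmf (poisson_pmf l) n) sums l"
proof -
  have e: "(\<lambda>m. l ^ m / fact m) sums exp l"
    using exp_converges[of l] by (simp add: divide_inverse mult.commute)
  have "(\<lambda>m. l * exp (-l) * (l ^ m / fact m)) sums (l * exp (-l) * exp l)"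
    by (rule sums_mult[OF e])
  moreover have "l * exp (-l) * (l ^ m / fact m) = real (Suc m) * pmf (poisson_pmf l) (Suc m)" for m
  proof -
    have f: "(fact m :: real) > 0" by simp
    have "real (Suc m) * pmf (poisson_pmf l) (Suc m) = real (Suc m) * (l * l ^ m / (real (Suc m) * fact m) * exp (-l))"
      using assms by (simp add: fact_Suc)
    also have "\<dots> = l * exp (-l) * (l ^ m / fact m)"
      using f by (simp add: field_simps del: of_nat_Suc)
    finally show ?thesis by simp
  qed
  moreover have "l * exp (-l) * exp l = l" by (simp add: exp_minus field_simps)
  ultimately have "(\<lambda>m. real (Suc m) * pmf (poisson_pmf l) (Suc m)) sums l"
    by simp
  then have "(\<lambda>n. real n * pmf (poisson_pmf l) n) sums (l + real 0 * pmf (poisson_pmf l) 0)"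
    by (rule sums_Suc)
  then show ?thesis by simp
qed

lemma pois_mean:
  assumes "0 < l"
  shows "(\<integral>\<^sup>+n. ennreal (real n) \<partial>measure_pmf (poisson_pmf l)) = ennreal l"
proof -
  have "(\<integral>\<^sup>+n. ennreal (real n) \<partial>measure_pmf (poisson_pmf l)) = (\<integral>\<^sup>+n. ennreal (real n) * ennreal (pmf (poisson_pmf l) n) \<partial>count_space UNIV)"
    by (simp add: nn_integral_measure_pmf mult.commute)
  also have "\<dots> = (\<Sum>n. ennreal (real n * pmf (poisson_pmf l) n))"
    by (simp add: nn_integral_count_space_nat ennreal_mult)
  also have "\<dots> = ennreal l"
    using pois_sums[OF assms] by (intro suminf_ennreal_eq) auto
  finally show ?thesis .
qed

lemma Po_mean:
  assumes "0 \<le> l"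
  shows "(\<integral>\<^sup>+n. of_nat n \<partial>measure_pmf (Po l)) = ennreal l"
proof (cases "l = 0")
  case True
  then show ?thesis by (simp add: Po_def)
next
  case False
  then have "0 < l" using assms by simp
  then show ?thesis using pois_mean[of l] False
    by (simp add: Po_def ennreal_of_nat_eq_real_of_nat)
qed

lemma cpo_q:
  fixes q :: "'a::euclidean_space \<Rightarrow> real"
  assumes pm: "prob_space mu" and sM: "sets mu = sets (borel :: 'a measure)"
    and sym: "distr mu borel uminus = mu"
    and qq: "quadf q" and qm: "q \<in> borel_measurable borel" and l: "0 \<le> l"
  shows "(\<integral>\<^sup>+x. ennreal (q x) \<partial>cpo l mu) = ennreal l * (\<integral>\<^sup>+y. ennreal (q y) \<partial>mu)"
proof -
  have qe: "(\<lambda>x. ennreal (q x)) \<in> borel_measurable borel" using qm by measurable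
  have "(\<integral>\<^sup>+x. ennreal (q x) \<partial>cpo l mu) = (\<integral>\<^sup>+n. of_nat n * (\<integral>\<^sup>+y. ennreal (q y) \<partial>mu) \<partial>measure_pmf (Po l))"
    by (simp add: cpo_nn[OF pm sM qe] Kn_nn[OF pm sM sym qq qm])
  also have "\<dots> = (\<integral>\<^sup>+n. of_nat n \<partial>measure_pmf (Po l)) * (\<integral>\<^sup>+y. ennreal (q y) \<partial>mu)"
    by (rule nn_integral_multc) simp
  finally show ?thesis by (simp add: Po_mean[OF l])
qed

lemma lin_neg: "linear (uminus :: 'a::real_vector \<Rightarrow> 'a)"
  by (rule linearI) auto

lemma cpo_sym:
  assumes pm: "prob_space mu" and sM: "sets mu = sets (borel :: 'a::euclidean_space measure)"
    and sym: "distr mu borel uminus = mu"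
  shows "distr (cpo l mu) borel uminus = cpo l mu"
  by (simp add: cpo_distr[OF pm sM _ lin_neg] sym)

lemma sum3_meas: "(\<lambda>(a, (b, c)). a + b + (c::'a::euclidean_space)) \<in> borel_measurable (borel \<Otimes>\<^sub>M (borel \<Otimes>\<^sub>M borel))"
  by measurable

lemma sets3:
  assumes "sets A = sets (borel::'a::euclidean_space measure)" "sets B = sets (borel::'a measure)" "sets C = sets (borel::'a measure)"
  shows "sets (A \<Otimes>\<^sub>M (B \<Otimes>\<^sub>M C)) = sets (borel \<Otimes>\<^sub>M (borel \<Otimes>\<^sub>M (borel :: 'a measure)))"
  using assms by (intro sets_pair_measure_cong) auto

lemma sum3_meas':
  assumes "sets A = sets (borel::'a::euclidean_space measure)" "sets B = sets (borel::'a measure)" "sets C = sets (borel::'a measure)"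
  shows "(\<lambda>(a, (b, c)). a + b + (c::'a::euclidean_space)) \<in> borel_measurable (A \<Otimes>\<^sub>M (B \<Otimes>\<^sub>M C))"
proof -
  have "measurable (A \<Otimes>\<^sub>M (B \<Otimes>\<^sub>M C)) (borel :: 'a measure) = measurable (borel \<Otimes>\<^sub>M (borel \<Otimes>\<^sub>M (borel :: 'a measure))) borel"
    by (rule measurable_cong_sets[OF sets3[OF assms]]) (rule refl)
  then show ?thesis using sum3_meas by (simp only:)
qed

lemma LLg_sets [simp]: "sets (LLg A B C) = sets borel"
  by (simp add: LLg_def)

lemma LLg_prob:
  assumes "prob_space A" "prob_space B" "prob_space C"
    "sets A = sets (borel::'a::euclidean_space measure)" "sets B = sets (borel::'a measure)" "sets C = sets (borel::'a measure)"
  shows "prob_space (LLg A B C)"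
  unfolding LLg_def
  by (rule prob_space.prob_space_distr[OF _ sum3_meas'[OF assms(4-6)]])
     (intro prob_space_pair assms(1-3))

lemma LLg_q:
  fixes q :: "'a::euclidean_space \<Rightarrow> real"
  assumes pA: "prob_space A" and pB: "prob_space B" and pC: "prob_space C"
    and sA: "sets A = sets (borel::'a measure)" and sB: "sets B = sets (borel::'a measure)" and sC: "sets C = sets (borel::'a measure)"
    and symB: "distr B borel uminus = B" and symC: "distr C borel uminus = C"
    and qq: "quadf q" and qm: "q \<in> borel_measurable borel"
  shows "(\<integral>\<^sup>+x. ennreal (q x) \<partial>LLg A B C) = (\<integral>\<^sup>+x. ennreal (q x) \<partial>A) + (\<integral>\<^sup>+x. ennreal (q x) \<partial>B) + (\<integral>\<^sup>+x. ennreal (q x) \<partial>C)"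
proof -
  interpret B: prob_space B by (rule pB)
  interpret C: prob_space C by (rule pC)
  interpret BC: prob_space "B \<Otimes>\<^sub>M C" by (intro prob_space_pair pB pC)
  have qe: "(\<lambda>x. ennreal (q x)) \<in> borel_measurable borel" using qm by measurable
  have m3: "(\<lambda>(a, (b, c)). a + b + (c::'a)) \<in> borel_measurable (A \<Otimes>\<^sub>M (B \<Otimes>\<^sub>M C))"
    by (rule sum3_meas'[OF sA sB sC])
  have mf: "(\<lambda>x. ennreal (q (case x of (a, b, c) \<Rightarrow> a + b + c))) \<in> borel_measurable (A \<Otimes>\<^sub>M (B \<Otimes>\<^sub>M C))"
    using measurable_compose[OF m3 qe] by (simp add: comp_def)
  have e2: "measurable (B \<Otimes>\<^sub>M C) (borel :: ennreal measure) = measurable (borel \<Otimes>\<^sub>M (borel :: 'a measure)) borel"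
    by (rule measurable_cong_sets) (auto intro: sets_pair_measure_cong simp: sB sC)
  have eC: "measurable C (borel :: ennreal measure) = measurable (borel :: 'a measure) borel"
    by (rule measurable_cong_sets) (auto simp: sC)
  have "(\<integral>\<^sup>+x. ennreal (q x) \<partial>LLg A B C) = (\<integral>\<^sup>+x. ennreal (q (case x of (a, b, c) \<Rightarrow> a + b + c)) \<partial>(A \<Otimes>\<^sub>M (B \<Otimes>\<^sub>M C)))"
    unfolding LLg_def by (rule nn_integral_distr[OF m3]) (use qe in simp)
  also have "\<dots> = (\<integral>\<^sup>+a. \<integral>\<^sup>+bc. ennreal (q (case (a, bc) of (a, b, c) \<Rightarrow> a + b + c)) \<partial>(B \<Otimes>\<^sub>M C) \<partial>A)"
    by (rule BC.nn_integral_fst[symmetric, OF mf])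
  also have "\<dots> = (\<integral>\<^sup>+a. ennreal (q a) + (\<integral>\<^sup>+x. ennreal (q x) \<partial>B) + (\<integral>\<^sup>+x. ennreal (q x) \<partial>C) \<partial>A)"
  proof (rule nn_integral_cong)
    fix a
    have mbc: "(\<lambda>bc. ennreal (q (case (a, bc) of (a, b, c) \<Rightarrow> a + b + c))) \<in> borel_measurable (B \<Otimes>\<^sub>M C)"
    proof -
      have "(\<lambda>bc. ennreal (q (a + fst bc + snd bc))) \<in> borel_measurable (borel \<Otimes>\<^sub>M (borel :: 'a measure))"
        using qm by measurable
      moreover have "(\<lambda>bc. ennreal (q (case (a, bc) of (a, b, c) \<Rightarrow> a + b + c))) = (\<lambda>bc. ennreal (q (a + fst bc + snd bc)))"
        by (auto simp: split_beta)
      ultimately show ?thesis unfolding e2 by simp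
    qed
    have "(\<integral>\<^sup>+bc. ennreal (q (case (a, bc) of (a, b, c) \<Rightarrow> a + b + c)) \<partial>(B \<Otimes>\<^sub>M C))
        = (\<integral>\<^sup>+b. \<integral>\<^sup>+c. ennreal (q ((a + b) + c)) \<partial>C \<partial>B)"
      by (subst C.nn_integral_fst[symmetric]) (use mbc in auto)
    also have "\<dots> = (\<integral>\<^sup>+b. ennreal (q (a + b)) + (\<integral>\<^sup>+x. ennreal (q x) \<partial>C) \<partial>B)"
      by (intro nn_integral_cong inner_sym[OF pC sC symC qq qm])
    also have "\<dots> = (\<integral>\<^sup>+b. ennreal (q (a + b)) \<partial>B) + (\<integral>\<^sup>+x. ennreal (q x) \<partial>C)"
    proof -
      have "(\<lambda>b. ennreal (q (a + b))) \<in> borel_measurable (borel :: 'a measure)"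
        using qm by measurable
      then have "(\<lambda>b. ennreal (q (a + b))) \<in> borel_measurable B"
        by (simp only: measurable_cong_sets[OF sB refl])
      then show ?thesis by (simp add: nn_integral_add B.emeasure_space_1)
    qed
    also have "\<dots> = ennreal (q a) + (\<integral>\<^sup>+x. ennreal (q x) \<partial>B) + (\<integral>\<^sup>+x. ennreal (q x) \<partial>C)"
      by (simp add: inner_sym[OF pB sB symB qq qm])
    finally show "(\<integral>\<^sup>+bc. ennreal (q (case (a, bc) of (a, b, c) \<Rightarrow> a + b + c)) \<partial>(B \<Otimes>\<^sub>M C))
       = ennreal (q a) + (\<integral>\<^sup>+x. ennreal (q x) \<partial>B) + (\<integral>\<^sup>+x. ennreal (q x) \<partial>C)" .
  qed
  also have "\<dots> = (\<integral>\<^sup>+x. ennreal (q x) \<partial>A) + (\<integral>\<^sup>+x. ennreal (q x) \<partial>B) + (\<integral>\<^sup>+x. ennreal (q x) \<partial>C)"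
  proof -
    interpret A: prob_space A by (rule pA)
    have "(\<lambda>a. ennreal (q a)) \<in> borel_measurable A"
      using qe by (simp only: measurable_cong_sets[OF sA refl])
    then show ?thesis by (simp add: nn_integral_add A.emeasure_space_1 add.assoc)
  qed
  finally show ?thesis .
qed

lemma meas_from_borel:
  assumes "sets X = sets (borel :: 'a::topological_space measure)" "f \<in> measurable (borel :: 'a measure) N"
  shows "f \<in> measurable X N"
  using assms(2) by (simp only: measurable_cong_sets[OF assms(1) refl])

lemma LLg_distr:
  fixes L :: "'a::euclidean_space \<Rightarrow> 'b::euclidean_space"
  assumes pA: "prob_space A" and pB: "prob_space B" and pC: "prob_space C"
    and sA: "sets A = sets (borel::'a measure)" and sB: "sets B = sets (borel::'a measure)" and sC: "sets C = sets (borel::'a measure)"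
    and Lm: "L \<in> borel_measurable borel" and lin: "linear L"
  shows "distr (LLg A B C) borel L = LLg (distr A borel L) (distr B borel L) (distr C borel L)"
proof -
  have LA: "L \<in> measurable A borel" by (rule meas_from_borel[OF sA Lm])
  have LB: "L \<in> measurable B borel" by (rule meas_from_borel[OF sB Lm])
  have LC: "L \<in> measurable C borel" by (rule meas_from_borel[OF sC Lm])
  have sfC: "sigma_finite_measure (distr C borel L)"
    by (rule prob_space_imp_sigma_finite, rule prob_space.prob_space_distr[OF pC LC])
  have sfB: "sigma_finite_measure (distr B borel L)"
    by (rule prob_space_imp_sigma_finite, rule prob_space.prob_space_distr[OF pB LB])
  have gBC: "(\<lambda>(b, c). (L b, L c)) \<in> measurable (B \<Otimes>\<^sub>M C) (borel \<Otimes>\<^sub>M borel)"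
    using LB LC by measurable
  have eBC: "distr (B \<Otimes>\<^sub>M C) (borel \<Otimes>\<^sub>M borel) (\<lambda>(b, c). (L b, L c)) = distr B borel L \<Otimes>\<^sub>M distr C borel L"
    by (rule pair_measure_distr[symmetric, OF LB LC sfC])
  have sfBC: "sigma_finite_measure (distr (B \<Otimes>\<^sub>M C) (borel \<Otimes>\<^sub>M borel) (\<lambda>(b, c). (L b, L c)))"
    unfolding eBC by (rule prob_space_imp_sigma_finite, intro prob_space_pair prob_space.prob_space_distr[OF pB LB] prob_space.prob_space_distr[OF pC LC])
  have T: "(\<lambda>(x, y). (L x, (\<lambda>(b, c). (L b, L c)) y)) \<in> measurable (A \<Otimes>\<^sub>M (B \<Otimes>\<^sub>M C)) (borel \<Otimes>\<^sub>M (borel \<Otimes>\<^sub>M borel))"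
    using LA gBC by measurable
  have "distr (LLg A B C) borel L = distr (A \<Otimes>\<^sub>M (B \<Otimes>\<^sub>M C)) borel (L \<circ> (\<lambda>(a, (b, c)). a + b + c))"
    unfolding LLg_def by (rule distr_distr[OF Lm sum3_meas'[OF sA sB sC]])
  also have "\<dots> = distr (A \<Otimes>\<^sub>M (B \<Otimes>\<^sub>M C)) borel ((\<lambda>(a, (b, c)). a + b + c) \<circ> (\<lambda>(x, y). (L x, (\<lambda>(b, c). (L b, L c)) y)))"
    by (rule distr_cong) (auto simp: linear_add[OF lin])
  also have "\<dots> = distr (distr (A \<Otimes>\<^sub>M (B \<Otimes>\<^sub>M C)) (borel \<Otimes>\<^sub>M (borel \<Otimes>\<^sub>M borel)) (\<lambda>(x, y). (L x, (\<lambda>(b, c). (L b, L c)) y))) borel (\<lambda>(a, (b, c)). a + b + c)"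
    by (rule distr_distr[symmetric, OF sum3_meas T])
  also have "distr (A \<Otimes>\<^sub>M (B \<Otimes>\<^sub>M C)) (borel \<Otimes>\<^sub>M (borel \<Otimes>\<^sub>M borel)) (\<lambda>(x, y). (L x, (\<lambda>(b, c). (L b, L c)) y))
      = distr A borel L \<Otimes>\<^sub>M distr (B \<Otimes>\<^sub>M C) (borel \<Otimes>\<^sub>M borel) (\<lambda>(b, c). (L b, L c))"
    by (rule pair_measure_distr[symmetric, OF LA gBC sfBC])
  finally show ?thesis unfolding eBC LLg_def .
qed

lemma tanh_meas [measurable]: "(tanh :: real \<Rightarrow> real) \<in> borel_measurable borel"
  by (intro borel_measurable_continuous_onI continuous_intros) auto
lemma fst_borel [measurable]: "fst \<in> (borel :: ('a::euclidean_space \<times> 'b::euclidean_space) measure) \<rightarrow>\<^sub>M borel"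
  by (intro borel_measurable_continuous_onI continuous_intros)
lemma snd_borel [measurable]: "snd \<in> (borel :: ('a::euclidean_space \<times> 'b::euclidean_space) measure) \<rightarrow>\<^sub>M borel"
  by (intro borel_measurable_continuous_onI continuous_intros)
lemma pair_borel [measurable (raw)]:
  fixes f :: "'c \<Rightarrow> 'a::euclidean_space" and g :: "'c \<Rightarrow> 'b::euclidean_space"
  assumes "f \<in> borel_measurable M" "g \<in> borel_measurable M"
  shows "(\<lambda>x. (f x, g x)) \<in> borel_measurable M"
proof -
  have "(\<lambda>x. (f x, g x)) \<in> M \<rightarrow>\<^sub>M borel \<Otimes>\<^sub>M borel" using assms by measurable
  then show ?thesis by (simp only: borel_prod)
qed

lemma id_cnt [measurable]: "(\<lambda>x::real. x) \<in> count_space UNIV \<rightarrow>\<^sub>M borel"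
  by simp

lemma cnt_lift:
  fixes F :: "'a::euclidean_space \<times> real \<times> real \<Rightarrow> 'b::euclidean_space"
  assumes "F \<in> borel_measurable (borel \<Otimes>\<^sub>M (borel \<Otimes>\<^sub>M borel))"
  shows "F \<in> borel_measurable (borel \<Otimes>\<^sub>M (count_space UNIV \<Otimes>\<^sub>M count_space UNIV))"
proof -
  have i1: "(\<lambda>p::real \<times> real. fst p) \<in> (count_space UNIV \<Otimes>\<^sub>M count_space UNIV) \<rightarrow>\<^sub>M borel"
    by (rule measurable_compose[OF measurable_fst id_cnt])
  have i2: "(\<lambda>p::real \<times> real. snd p) \<in> (count_space UNIV \<Otimes>\<^sub>M count_space UNIV) \<rightarrow>\<^sub>M borel"
    by (rule measurable_compose[OF measurable_snd id_cnt])
  have i: "(\<lambda>p::real \<times> real. (fst p, snd p)) \<in> (count_space UNIV \<Otimes>\<^sub>M count_space UNIV) \<rightarrow>\<^sub>M (borel \<Otimes>\<^sub>M borel)"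
    by (rule measurable_Pair[OF i1 i2])
  have j: "(\<lambda>p::'a \<times> real \<times> real. (fst p, (fst (snd p), snd (snd p)))) \<in> (borel \<Otimes>\<^sub>M (count_space UNIV \<Otimes>\<^sub>M count_space UNIV)) \<rightarrow>\<^sub>M (borel \<Otimes>\<^sub>M (borel \<Otimes>\<^sub>M borel))"
    by (rule measurable_Pair[OF measurable_fst measurable_compose[OF measurable_snd i]])
  show ?thesis using measurable_compose[OF j assms] by simp
qed

definition pl :: "(real \<Rightarrow> real \<Rightarrow> pt \<Rightarrow> pt) \<Rightarrow> real \<Rightarrow> real \<Rightarrow> pt \<times> pt \<Rightarrow> pt \<times> pt" where
  "pl g s r z = (g s r (fst z), g s r (snd z))"

lemma m_both: "(\<lambda>(x, (s, r)). both_coords s r x) \<in> borel_measurable (borel \<Otimes>\<^sub>M (count_space UNIV \<Otimes>\<^sub>M count_space UNIV))"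
  by (rule cnt_lift) (unfold both_coords_def LLterm_def, measurable)
lemma m_first: "(\<lambda>(x, (s, r)). first_coord s r x) \<in> borel_measurable (borel \<Otimes>\<^sub>M (count_space UNIV \<Otimes>\<^sub>M count_space UNIV))"
  by (rule cnt_lift) (unfold first_coord_def LLterm_def, measurable)
lemma m_second: "(\<lambda>(x, (s, r)). second_coord s r x) \<in> borel_measurable (borel \<Otimes>\<^sub>M (count_space UNIV \<Otimes>\<^sub>M count_space UNIV))"
  by (rule cnt_lift) (unfold second_coord_def LLterm_def, measurable)
lemma m_pboth: "(\<lambda>(x, (s, r)). pl both_coords s r x) \<in> borel_measurable (borel \<Otimes>\<^sub>M (count_space UNIV \<Otimes>\<^sub>M count_space UNIV))"
  by (rule cnt_lift) (unfold pl_def both_coords_def LLterm_def, measurable)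
lemma m_pfirst: "(\<lambda>(x, (s, r)). pl first_coord s r x) \<in> borel_measurable (borel \<Otimes>\<^sub>M (count_space UNIV \<Otimes>\<^sub>M count_space UNIV))"
  by (rule cnt_lift) (unfold pl_def first_coord_def LLterm_def, measurable)
lemma m_psecond: "(\<lambda>(x, (s, r)). pl second_coord s r x) \<in> borel_measurable (borel \<Otimes>\<^sub>M (count_space UNIV \<Otimes>\<^sub>M count_space UNIV))"
  by (rule cnt_lift) (unfold pl_def second_coord_def LLterm_def, measurable)

lemma LLterm_neg: "LLterm (-s) r x = - LLterm s r x"
  by (simp add: LLterm_def)

lemma sym_both: "both_coords (-s) r x = - both_coords s r x"
  by (simp add: both_coords_def LLterm_neg)
lemma sym_first: "first_coord (-s) r x = - first_coord s r x"
  by (simp add: first_coord_def LLterm_neg)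
lemma sym_second: "second_coord (-s) r x = - second_coord s r x"
  by (simp add: second_coord_def LLterm_neg)
lemma sym_pl: "(\<And>s r x. g (-s) r x = - g s r x) \<Longrightarrow> pl g (-s) r z = - pl g s r z"
  by (simp add: pl_def)

definition LL2 :: "real \<Rightarrow> real \<Rightarrow> (pt \<times> pt) measure \<Rightarrow> (pt \<times> pt) measure" where
  "LL2 d t C = LLg (cpo (t*d) (tlaw (pl both_coords) C))
   (cpo ((1-t)*d) (tlaw (pl first_coord) C)) (cpo ((1-t)*d) (tlaw (pl second_coord) C))"

lemma LL2_marg:
  fixes L :: "pt \<times> pt \<Rightarrow> pt"
  assumes pC: "prob_space C" and sC: "sets C = sets (borel :: (pt \<times> pt) measure)"
    and Lm: "L \<in> borel_measurable borel" and lin: "linear L"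
    and eqL: "\<And>g s r z. L (pl g s r z) = g s r (L z)"
  shows "distr (LL2 d t C) borel L = LL d t (distr C borel L)"
proof -
  note pb = tlaw_prob[OF pC sC m_pboth] and pf = tlaw_prob[OF pC sC m_pfirst] and ps = tlaw_prob[OF pC sC m_psecond]
  note sb = tlaw_sets
  have "distr (LL2 d t C) borel L = LLg (distr (cpo (t*d) (tlaw (pl both_coords) C)) borel L)
     (distr (cpo ((1-t)*d) (tlaw (pl first_coord) C)) borel L) (distr (cpo ((1-t)*d) (tlaw (pl second_coord) C)) borel L)"
    unfolding LL2_def
    by (rule LLg_distr[OF cpo_prob[OF pb sb] cpo_prob[OF pf sb] cpo_prob[OF ps sb] cpo_sets cpo_sets cpo_sets Lm lin])
  also have "\<dots> = LLg (cpo (t*d) (distr (tlaw (pl both_coords) C) borel L))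
     (cpo ((1-t)*d) (distr (tlaw (pl first_coord) C) borel L)) (cpo ((1-t)*d) (distr (tlaw (pl second_coord) C) borel L))"
    by (simp add: cpo_distr[OF pb sb Lm lin] cpo_distr[OF pf sb Lm lin] cpo_distr[OF ps sb Lm lin])
  also have "\<dots> = LL d t (distr C borel L)"
    unfolding LL_eq
    by (simp add: tlaw_distr[OF sC m_pboth m_both Lm Lm eqL] tlaw_distr[OF sC m_pfirst m_first Lm Lm eqL]
        tlaw_distr[OF sC m_psecond m_second Lm Lm eqL])
  finally show ?thesis .
qed

lemma LL2_fst:
  assumes pC: "prob_space C" and sC: "sets C = sets (borel :: (pt \<times> pt) measure)"
  shows "distr (LL2 d t C) borel fst = LL d t (distr C borel fst)"
  by (rule LL2_marg[OF pC sC]) (auto simp: linear_fst pl_def)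

lemma LL2_snd:
  assumes pC: "prob_space C" and sC: "sets C = sets (borel :: (pt \<times> pt) measure)"
  shows "distr (LL2 d t C) borel snd = LL d t (distr C borel snd)"
  by (rule LL2_marg[OF pC sC]) (auto simp: linear_snd pl_def)

lemma LL2_prob:
  assumes pC: "prob_space C" and sC: "sets C = sets (borel :: (pt \<times> pt) measure)"
  shows "prob_space (LL2 d t C)"
  unfolding LL2_def
  by (rule LLg_prob[OF cpo_prob[OF tlaw_prob[OF pC sC m_pboth] tlaw_sets] cpo_prob[OF tlaw_prob[OF pC sC m_pfirst] tlaw_sets]
      cpo_prob[OF tlaw_prob[OF pC sC m_psecond] tlaw_sets] cpo_sets cpo_sets cpo_sets])

lemma LL_prob:
  assumes pC: "prob_space C" and sC: "sets C = sets (borel :: pt measure)"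
  shows "prob_space (LL d t C)"
  unfolding LL_eq
  by (rule LLg_prob[OF cpo_prob[OF tlaw_prob[OF pC sC m_both] tlaw_sets] cpo_prob[OF tlaw_prob[OF pC sC m_first] tlaw_sets]
      cpo_prob[OF tlaw_prob[OF pC sC m_second] tlaw_sets] cpo_sets cpo_sets cpo_sets])

lemma quadf_norm: "quadf (\<lambda>x::'a::real_inner. (norm x)\<^sup>2)"
  unfolding quadf_def
  by (simp add: power2_norm_eq_inner inner_add_left inner_add_right inner_diff_left inner_diff_right inner_commute)

lemma quadf_lin: "linear L \<Longrightarrow> quadf q \<Longrightarrow> quadf (\<lambda>z. q (L z))"
  unfolding quadf_def by (simp add: linear_add linear_diff)

definition q2 :: "pt \<times> pt \<Rightarrow> real" where "q2 z = (dist (fst z) (snd z))\<^sup>2"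
definition q1 :: "pt \<Rightarrow> real" where "q1 z = (norm z)\<^sup>2"

lemma quadf_q1: "quadf q1"
  unfolding q1_def[abs_def] by (rule quadf_norm)

lemma quadf_q2: "quadf q2"
proof -
  have l: "linear (\<lambda>z::pt \<times> pt. fst z - snd z)"
    by (intro linear_compose_sub linear_fst linear_snd)
  have "quadf (\<lambda>z::pt \<times> pt. (norm (fst z - snd z))\<^sup>2)"
    by (rule quadf_lin[OF l quadf_norm])
  then show ?thesis unfolding q2_def[abs_def] by (simp add: dist_norm)
qed

lemma q1_meas [measurable]: "q1 \<in> borel_measurable borel"
  unfolding q1_def[abs_def] by measurable
lemma q2_meas [measurable]: "q2 \<in> borel_measurable borel"
  unfolding q2_def[abs_def] by measurable

lemma dist_sq_pt: "(dist (a::pt) b)\<^sup>2 = (fst a - fst b)\<^sup>2 + (snd a - snd b)\<^sup>2"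
  by (cases a; cases b) (simp add: dist_Pair_Pair dist_real_def)

lemma norm_sq_pt: "(norm (a::pt))\<^sup>2 = (fst a)\<^sup>2 + (snd a)\<^sup>2"
  by (cases a) (simp add: norm_Pair)

lemma e4: assumes "0 \<le> a" "0 \<le> b" "0 \<le> c" "0 \<le> d"
  shows "(ennreal a + ennreal b + ennreal c + ennreal d) / 4 = ennreal ((a + b + c + d) / 4)"
proof -
  have "ennreal a + ennreal b + ennreal c + ennreal d = ennreal (a + b + c + d)"
    using assms by (simp add: ennreal_plus)
  moreover have "ennreal (a + b + c + d) / 4 = ennreal ((a + b + c + d) / 4)"
    using divide_ennreal[of "a + b + c + d" 4] assms by simp
  ultimately show ?thesis by simp
qed

lemma tlaw_bound:
  fixes g :: "real \<Rightarrow> real \<Rightarrow> 'a::euclidean_space \<Rightarrow> 'b::euclidean_space"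
  assumes sM: "sets M = sets (borel :: 'a measure)"
    and g: "(\<lambda>(x, (s, r)). g s r x) \<in> borel_measurable (borel \<Otimes>\<^sub>M (count_space UNIV \<Otimes>\<^sub>M count_space UNIV))"
    and qm: "q \<in> borel_measurable borel" and q0: "\<And>x. 0 \<le> q x"
    and bnd: "\<And>z. (q (g (-1) (-1) z) + q (g (-1) 1 z) + q (g 1 (-1) z) + q (g 1 1 z)) / 4 \<le> B z"
  shows "(\<integral>\<^sup>+y. ennreal (q y) \<partial>tlaw g M) \<le> (\<integral>\<^sup>+z. ennreal (B z) \<partial>M)"
proof -
  have qe: "(\<lambda>x. ennreal (q x)) \<in> borel_measurable borel" using qm by measurable
  show ?thesis
    unfolding tlaw_nn[OF sM g qe]
    by (intro nn_integral_mono) (simp only: e4 q0, rule ennreal_leI[OF bnd])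
qed

lemma bnd_pboth: "(q2 (pl both_coords (-1) (-1) z) + q2 (pl both_coords (-1) 1 z) + q2 (pl both_coords 1 (-1) z) + q2 (pl both_coords 1 1 z)) / 4
   \<le> (1/2) * ((fst (fst z) - fst (snd z))\<^sup>2 + (snd (fst z) - snd (snd z))\<^sup>2)"
  using key_avg[of "fst (fst z)" "fst (snd z)"] key_avg[of "snd (fst z)" "snd (snd z)"]
  by (simp add: q2_def pl_def both_coords_def dist_sq_pt)

lemma bnd_pfirst: "(q2 (pl first_coord (-1) (-1) z) + q2 (pl first_coord (-1) 1 z) + q2 (pl first_coord 1 (-1) z) + q2 (pl first_coord 1 1 z)) / 4
   \<le> (1/2) * (fst (fst z) - fst (snd z))\<^sup>2"
  using key_avg[of "fst (fst z)" "fst (snd z)"]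
  by (simp add: q2_def pl_def first_coord_def dist_sq_pt)

lemma bnd_psecond: "(q2 (pl second_coord (-1) (-1) z) + q2 (pl second_coord (-1) 1 z) + q2 (pl second_coord 1 (-1) z) + q2 (pl second_coord 1 1 z)) / 4
   \<le> (1/2) * (snd (fst z) - snd (snd z))\<^sup>2"
  using key_avg[of "snd (fst z)" "snd (snd z)"]
  by (simp add: q2_def pl_def second_coord_def dist_sq_pt)

lemma bnd_both: "(q1 (both_coords (-1) (-1) x) + q1 (both_coords (-1) 1 x) + q1 (both_coords 1 (-1) x) + q1 (both_coords 1 1 x)) / 4
   \<le> 2 * q1 x + 4"
proof -
  have "\<And>s r. s \<in> {-1,1} \<Longrightarrow> r \<in> {-1,1} \<Longrightarrow> q1 (both_coords s r x) \<le> 2 * q1 x + 4"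
    using LL1_bound[of _ _ "fst x"] LL1_bound[of _ _ "snd x"]
    by (simp add: q1_def both_coords_def norm_sq_pt) (smt (verit))
  from this[of "-1" "-1"] this[of "-1" 1] this[of 1 "-1"] this[of 1 1] show ?thesis by simp
qed

lemma bnd_first: "(q1 (first_coord (-1) (-1) x) + q1 (first_coord (-1) 1 x) + q1 (first_coord 1 (-1) x) + q1 (first_coord 1 1 x)) / 4
   \<le> 2 * q1 x + 4"
proof -
  have "q1 (first_coord s r x) \<le> 2 * q1 x + 4" if "s \<in> {-1,1}" "r \<in> {-1,1}" for s r
  proof -
    have "(LLterm s r (fst x))\<^sup>2 \<le> 2 * (fst x)\<^sup>2 + 2" by (rule LL1_bound[OF that])
    moreover have "0 \<le> (snd x)\<^sup>2" by simp
    ultimately show ?thesis by (simp add: q1_def first_coord_def norm_sq_pt) (smt (verit) zero_le_power2)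
  qed
  from this[of "-1" "-1"] this[of "-1" 1] this[of 1 "-1"] this[of 1 1] show ?thesis by simp
qed

lemma bnd_second: "(q1 (second_coord (-1) (-1) x) + q1 (second_coord (-1) 1 x) + q1 (second_coord 1 (-1) x) + q1 (second_coord 1 1 x)) / 4
   \<le> 2 * q1 x + 4"
proof -
  have "q1 (second_coord s r x) \<le> 2 * q1 x + 4" if "s \<in> {-1,1}" "r \<in> {-1,1}" for s r
  proof -
    have "(LLterm s r (snd x))\<^sup>2 \<le> 2 * (snd x)\<^sup>2 + 2" by (rule LL1_bound[OF that])
    moreover have "0 \<le> (fst x)\<^sup>2" by simp
    ultimately show ?thesis by (simp add: q1_def second_coord_def norm_sq_pt) (smt (verit) zero_le_power2)
  qed
  from this[of "-1" "-1"] this[of "-1" 1] this[of 1 "-1"] this[of 1 1] show ?thesis by simp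
qed

lemma ab_alg:
  assumes "0 \<le> t" "t \<le> 1" "0 \<le> (d::real)"
  shows "ennreal (t*d) * (ennreal (1/2) * (I1 + I2)) + ennreal ((1-t)*d) * (ennreal (1/2) * I1)
      + ennreal ((1-t)*d) * (ennreal (1/2) * I2) = ennreal (d/2) * (I1 + I2)"
proof -
  have x1: "0 \<le> t*d" "0 \<le> (1-t)*d" using assms by simp_all
  have "ennreal (t*d) * ennreal (1/2) = ennreal (t*d*(1/2))" by (rule ennreal_mult[symmetric]) (use x1 in auto)
  moreover have "ennreal ((1-t)*d) * ennreal (1/2) = ennreal ((1-t)*d*(1/2))" by (rule ennreal_mult[symmetric]) (use x1 in auto)
  moreover have "ennreal (t*d*(1/2)) + ennreal ((1-t)*d*(1/2)) = ennreal (t*d*(1/2) + (1-t)*d*(1/2))"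
    by (rule ennreal_plus[symmetric]) (use x1 in auto)
  ultimately have "ennreal (t*d) * ennreal (1/2) + ennreal ((1-t)*d) * ennreal (1/2) = ennreal (t*d*(1/2) + (1-t)*d*(1/2))"
    by simp
  also have "t*d*(1/2) + (1-t)*d*(1/2) = d/2"
  proof -
    have "(1-t)*d = d - t*d" by (simp add: algebra_simps)
    then show ?thesis by linarith
  qed
  finally have ab: "ennreal (t*d) * ennreal (1/2) + ennreal ((1-t)*d) * ennreal (1/2) = ennreal (d/2)" .
  have "ennreal (t*d) * (ennreal (1/2) * (I1 + I2)) + ennreal ((1-t)*d) * (ennreal (1/2) * I1)
      + ennreal ((1-t)*d) * (ennreal (1/2) * I2) = (ennreal (t*d) * ennreal (1/2) + ennreal ((1-t)*d) * ennreal (1/2)) * (I1 + I2)"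
    by (simp add: algebra_simps)
  then show ?thesis by (simp only: ab)
qed

lemma half_sum:
  assumes "0 \<le> a" "0 \<le> b"
  shows "ennreal ((1/2) * (a + b)) = ennreal (1/2) * (ennreal a + ennreal b)"
proof -
  have "ennreal ((1/2) * (a + b)) = ennreal (1/2) * ennreal (a + b)" by (rule ennreal_mult) (use assms in auto)
  also have "ennreal (a + b) = ennreal a + ennreal b" by (rule ennreal_plus) (use assms in auto)
  finally show ?thesis .
qed

lemma LL2_cost:
  assumes pC: "prob_space C" and sC: "sets C = sets (borel :: (pt \<times> pt) measure)"
    and t0: "0 \<le> t" and t1: "t \<le> 1" and d0: "0 \<le> d"
  shows "(\<integral>\<^sup>+z. ennreal (q2 z) \<partial>LL2 d t C) \<le> ennreal (d/2) * (\<integral>\<^sup>+z. ennreal (q2 z) \<partial>C)"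
proof -
  define Tb where "Tb = tlaw (pl both_coords) C"
  define Tf where "Tf = tlaw (pl first_coord) C"
  define Ts where "Ts = tlaw (pl second_coord) C"
  have pb: "prob_space Tb" unfolding Tb_def by (rule tlaw_prob[OF pC sC m_pboth])
  have pf: "prob_space Tf" unfolding Tf_def by (rule tlaw_prob[OF pC sC m_pfirst])
  have ps: "prob_space Ts" unfolding Ts_def by (rule tlaw_prob[OF pC sC m_psecond])
  have sb: "sets Tb = sets borel" "sets Tf = sets borel" "sets Ts = sets borel"
    unfolding Tb_def Tf_def Ts_def by simp_all
  have yb: "distr Tb borel uminus = Tb" unfolding Tb_def by (rule tlaw_sym[OF sC m_pboth sym_pl[of both_coords, OF sym_both]])
  have yf: "distr Tf borel uminus = Tf" unfolding Tf_def by (rule tlaw_sym[OF sC m_pfirst sym_pl[of first_coord, OF sym_first]])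
  have ys: "distr Ts borel uminus = Ts" unfolding Ts_def by (rule tlaw_sym[OF sC m_psecond sym_pl[of second_coord, OF sym_second]])
  have l1: "0 \<le> t * d" using t0 d0 by simp
  have l2: "0 \<le> (1 - t) * d" using t1 d0 by simp
  have q20: "\<And>x. 0 \<le> q2 x" by (simp add: q2_def)
  define D1 where "D1 = (\<lambda>z::pt \<times> pt. (fst (fst z) - fst (snd z))\<^sup>2)"
  define D2 where "D2 = (\<lambda>z::pt \<times> pt. (snd (fst z) - snd (snd z))\<^sup>2)"
  have mD1: "(\<lambda>z. ennreal (D1 z)) \<in> borel_measurable C"
    by (rule meas_from_borel[OF sC]) (unfold D1_def, measurable)
  have mD2: "(\<lambda>z. ennreal (D2 z)) \<in> borel_measurable C"
    by (rule meas_from_borel[OF sC]) (unfold D2_def, measurable)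
  have "(\<integral>\<^sup>+z. ennreal (q2 z) \<partial>LL2 d t C) =
     (\<integral>\<^sup>+z. ennreal (q2 z) \<partial>cpo (t*d) Tb) + (\<integral>\<^sup>+z. ennreal (q2 z) \<partial>cpo ((1-t)*d) Tf) + (\<integral>\<^sup>+z. ennreal (q2 z) \<partial>cpo ((1-t)*d) Ts)"
    unfolding LL2_def Tb_def[symmetric] Tf_def[symmetric] Ts_def[symmetric]
    by (rule LLg_q[OF cpo_prob[OF pb sb(1)] cpo_prob[OF pf sb(2)] cpo_prob[OF ps sb(3)] cpo_sets cpo_sets cpo_sets
        cpo_sym[OF pf sb(2) yf] cpo_sym[OF ps sb(3) ys] quadf_q2 q2_meas])
  also have "\<dots> = ennreal (t*d) * (\<integral>\<^sup>+z. ennreal (q2 z) \<partial>Tb) + ennreal ((1-t)*d) * (\<integral>\<^sup>+z. ennreal (q2 z) \<partial>Tf)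
      + ennreal ((1-t)*d) * (\<integral>\<^sup>+z. ennreal (q2 z) \<partial>Ts)"
    by (simp add: cpo_q[OF pb sb(1) yb quadf_q2 q2_meas l1] cpo_q[OF pf sb(2) yf quadf_q2 q2_meas l2]
        cpo_q[OF ps sb(3) ys quadf_q2 q2_meas l2])
  also have "\<dots> \<le> ennreal (t*d) * (\<integral>\<^sup>+z. ennreal ((1/2) * (D1 z + D2 z)) \<partial>C) + ennreal ((1-t)*d) * (\<integral>\<^sup>+z. ennreal ((1/2) * D1 z) \<partial>C)
      + ennreal ((1-t)*d) * (\<integral>\<^sup>+z. ennreal ((1/2) * D2 z) \<partial>C)"
  proof (intro add_mono mult_left_mono order_refl zero_le)
    show "(\<integral>\<^sup>+z. ennreal (q2 z) \<partial>Tb) \<le> (\<integral>\<^sup>+z. ennreal ((1/2) * (D1 z + D2 z)) \<partial>C)"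
      unfolding Tb_def D1_def D2_def by (rule tlaw_bound[OF sC m_pboth q2_meas q20 bnd_pboth])
    show "(\<integral>\<^sup>+z. ennreal (q2 z) \<partial>Tf) \<le> (\<integral>\<^sup>+z. ennreal ((1/2) * D1 z) \<partial>C)"
      unfolding Tf_def D1_def by (rule tlaw_bound[OF sC m_pfirst q2_meas q20 bnd_pfirst])
    show "(\<integral>\<^sup>+z. ennreal (q2 z) \<partial>Ts) \<le> (\<integral>\<^sup>+z. ennreal ((1/2) * D2 z) \<partial>C)"
      unfolding Ts_def D2_def by (rule tlaw_bound[OF sC m_psecond q2_meas q20 bnd_psecond])
  qed
  also have "\<dots> = ennreal (t*d) * (ennreal (1/2) * ((\<integral>\<^sup>+z. ennreal (D1 z) \<partial>C) + (\<integral>\<^sup>+z. ennreal (D2 z) \<partial>C)))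
      + ennreal ((1-t)*d) * (ennreal (1/2) * (\<integral>\<^sup>+z. ennreal (D1 z) \<partial>C))
      + ennreal ((1-t)*d) * (ennreal (1/2) * (\<integral>\<^sup>+z. ennreal (D2 z) \<partial>C))"
  proof -
    have "(\<integral>\<^sup>+z. ennreal ((1/2) * (D1 z + D2 z)) \<partial>C) = (\<integral>\<^sup>+z. ennreal (1/2) * (ennreal (D1 z) + ennreal (D2 z)) \<partial>C)"
      by (intro nn_integral_cong) (unfold D1_def D2_def, rule half_sum, simp, simp)
    also have "\<dots> = ennreal (1/2) * ((\<integral>\<^sup>+z. ennreal (D1 z) \<partial>C) + (\<integral>\<^sup>+z. ennreal (D2 z) \<partial>C))"
      using mD1 mD2 by (simp add: nn_integral_cmult nn_integral_add)
    finally have e1: "(\<integral>\<^sup>+z. ennreal ((1/2) * (D1 z + D2 z)) \<partial>C) = ennreal (1/2) * ((\<integral>\<^sup>+z. ennreal (D1 z) \<partial>C) + (\<integral>\<^sup>+z. ennreal (D2 z) \<partial>C))" .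
    have e2: "(\<integral>\<^sup>+z. ennreal ((1/2) * D1 z) \<partial>C) = ennreal (1/2) * (\<integral>\<^sup>+z. ennreal (D1 z) \<partial>C)"
    proof -
      have "(\<integral>\<^sup>+z. ennreal ((1/2) * D1 z) \<partial>C) = (\<integral>\<^sup>+z. ennreal (1/2) * ennreal (D1 z) \<partial>C)"
        by (intro nn_integral_cong) (rule ennreal_mult, simp, simp add: D1_def)
      also have "\<dots> = ennreal (1/2) * (\<integral>\<^sup>+z. ennreal (D1 z) \<partial>C)"
        by (rule nn_integral_cmult[OF mD1])
      finally show ?thesis .
    qed
    have e3: "(\<integral>\<^sup>+z. ennreal ((1/2) * D2 z) \<partial>C) = ennreal (1/2) * (\<integral>\<^sup>+z. ennreal (D2 z) \<partial>C)"
    proof -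
      have "(\<integral>\<^sup>+z. ennreal ((1/2) * D2 z) \<partial>C) = (\<integral>\<^sup>+z. ennreal (1/2) * ennreal (D2 z) \<partial>C)"
        by (intro nn_integral_cong) (rule ennreal_mult, simp, simp add: D2_def)
      also have "\<dots> = ennreal (1/2) * (\<integral>\<^sup>+z. ennreal (D2 z) \<partial>C)"
        by (rule nn_integral_cmult[OF mD2])
      finally show ?thesis .
    qed
    show ?thesis by (simp only: e1 e2 e3)
  qed
  also have "\<dots> = ennreal (d/2) * ((\<integral>\<^sup>+z. ennreal (D1 z) \<partial>C) + (\<integral>\<^sup>+z. ennreal (D2 z) \<partial>C))"
    by (rule ab_alg[OF t0 t1 d0])
  also have "(\<integral>\<^sup>+z. ennreal (D1 z) \<partial>C) + (\<integral>\<^sup>+z. ennreal (D2 z) \<partial>C) = (\<integral>\<^sup>+z. ennreal (q2 z) \<partial>C)"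
  proof -
    have "(\<integral>\<^sup>+z. ennreal (q2 z) \<partial>C) = (\<integral>\<^sup>+z. ennreal (D1 z) + ennreal (D2 z) \<partial>C)"
      by (intro nn_integral_cong) (simp add: q2_def D1_def D2_def dist_sq_pt ennreal_plus)
    also have "\<dots> = (\<integral>\<^sup>+z. ennreal (D1 z) \<partial>C) + (\<integral>\<^sup>+z. ennreal (D2 z) \<partial>C)"
      by (rule nn_integral_add[OF mD1 mD2])
    finally show ?thesis by simp
  qed
  finally show ?thesis .
qed

lemma lin_bound_int:
  assumes pR: "prob_space R" and sR: "sets R = sets (borel :: pt measure)"
    and fin: "(\<integral>\<^sup>+x. ennreal (q1 x) \<partial>R) < \<infinity>"
  shows "(\<integral>\<^sup>+x. ennreal (2 * q1 x + 4) \<partial>R) < \<infinity>"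
proof -
  interpret prob_space R by (rule pR)
  have m: "(\<lambda>x. ennreal (q1 x)) \<in> borel_measurable R"
    by (rule meas_from_borel[OF sR]) measurable
  have "(\<integral>\<^sup>+x. ennreal (2 * q1 x + 4) \<partial>R) = (\<integral>\<^sup>+x. 2 * ennreal (q1 x) + 4 \<partial>R)"
    by (intro nn_integral_cong) (simp add: q1_def ennreal_plus ennreal_mult)
  also have "\<dots> = 2 * (\<integral>\<^sup>+x. ennreal (q1 x) \<partial>R) + 4"
    using m by (simp add: nn_integral_add nn_integral_cmult emeasure_space_1)
  also have "\<dots> < \<infinity>" using fin by (simp add: ennreal_mult_less_top)
  finally show ?thesis .
qed

lemma LL_moment:
  assumes pR: "prob_space R" and sR: "sets R = sets (borel :: pt measure)"
    and fin: "(\<integral>\<^sup>+x. ennreal (q1 x) \<partial>R) < \<infinity>"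
    and t0: "0 \<le> t" and t1: "t \<le> 1" and d0: "0 \<le> d"
  shows "(\<integral>\<^sup>+x. ennreal (q1 x) \<partial>LL d t R) < \<infinity>"
proof -
  define Tb where "Tb = tlaw both_coords R"
  define Tf where "Tf = tlaw first_coord R"
  define Ts where "Ts = tlaw second_coord R"
  have pb: "prob_space Tb" unfolding Tb_def by (rule tlaw_prob[OF pR sR m_both])
  have pf: "prob_space Tf" unfolding Tf_def by (rule tlaw_prob[OF pR sR m_first])
  have ps: "prob_space Ts" unfolding Ts_def by (rule tlaw_prob[OF pR sR m_second])
  have sb: "sets Tb = sets borel" "sets Tf = sets borel" "sets Ts = sets borel"
    unfolding Tb_def Tf_def Ts_def by simp_all
  have yb: "distr Tb borel uminus = Tb" unfolding Tb_def by (rule tlaw_sym[OF sR m_both sym_both])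
  have yf: "distr Tf borel uminus = Tf" unfolding Tf_def by (rule tlaw_sym[OF sR m_first sym_first])
  have ys: "distr Ts borel uminus = Ts" unfolding Ts_def by (rule tlaw_sym[OF sR m_second sym_second])
  have l1: "0 \<le> t * d" using t0 d0 by simp
  have l2: "0 \<le> (1 - t) * d" using t1 d0 by simp
  have q10: "\<And>x. 0 \<le> q1 x" by (simp add: q1_def)
  note K = lin_bound_int[OF pR sR fin]
  have fb: "(\<integral>\<^sup>+z. ennreal (q1 z) \<partial>Tb) < \<infinity>"
    unfolding Tb_def by (rule le_less_trans[OF tlaw_bound[OF sR m_both q1_meas q10 bnd_both] K])
  have ff: "(\<integral>\<^sup>+z. ennreal (q1 z) \<partial>Tf) < \<infinity>"
    unfolding Tf_def by (rule le_less_trans[OF tlaw_bound[OF sR m_first q1_meas q10 bnd_first] K])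
  have fs: "(\<integral>\<^sup>+z. ennreal (q1 z) \<partial>Ts) < \<infinity>"
    unfolding Ts_def by (rule le_less_trans[OF tlaw_bound[OF sR m_second q1_meas q10 bnd_second] K])
  have "(\<integral>\<^sup>+z. ennreal (q1 z) \<partial>LL d t R) =
     (\<integral>\<^sup>+z. ennreal (q1 z) \<partial>cpo (t*d) Tb) + (\<integral>\<^sup>+z. ennreal (q1 z) \<partial>cpo ((1-t)*d) Tf) + (\<integral>\<^sup>+z. ennreal (q1 z) \<partial>cpo ((1-t)*d) Ts)"
    unfolding LL_eq Tb_def[symmetric] Tf_def[symmetric] Ts_def[symmetric]
    by (rule LLg_q[OF cpo_prob[OF pb sb(1)] cpo_prob[OF pf sb(2)] cpo_prob[OF ps sb(3)] cpo_sets cpo_sets cpo_sets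
        cpo_sym[OF pf sb(2) yf] cpo_sym[OF ps sb(3) ys] quadf_q1 q1_meas])
  also have "\<dots> = ennreal (t*d) * (\<integral>\<^sup>+z. ennreal (q1 z) \<partial>Tb) + ennreal ((1-t)*d) * (\<integral>\<^sup>+z. ennreal (q1 z) \<partial>Tf)
      + ennreal ((1-t)*d) * (\<integral>\<^sup>+z. ennreal (q1 z) \<partial>Ts)"
    by (simp add: cpo_q[OF pb sb(1) yb quadf_q1 q1_meas l1] cpo_q[OF pf sb(2) yf quadf_q1 q1_meas l2]
        cpo_q[OF ps sb(3) ys quadf_q1 q1_meas l2])
  also have "\<dots> < \<infinity>" using fb ff fs by (simp add: ennreal_mult_less_top)
  finally show ?thesis .
qed

lemma W2space_iff: "rho \<in> W2space \<longleftrightarrow> sets rho = sets borel \<and> prob_space rho \<and> (\<integral>\<^sup>+x. ennreal (q1 x) \<partial>rho) < \<infinity>"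
  by (simp add: W2space_def q1_def)

lemma LL_W2:
  assumes "rho \<in> W2space" "0 \<le> t" "t \<le> 1" "0 \<le> d"
  shows "LL d t rho \<in> W2space"
  using assms LL_moment[of rho t d] LL_prob[of rho d t]
  by (auto simp: W2space_iff LL_eq)

lemma distr_pair_snd':
  assumes pM: "prob_space M" and pN: "prob_space N"
  shows "distr (M \<Otimes>\<^sub>M N) N snd = N"
proof (intro measure_eqI)
  interpret N: prob_space N by (rule pN)
  interpret M: prob_space M by (rule pM)
  interpret MN: pair_sigma_finite M N by unfold_locales
  fix A assume A: "A \<in> sets (distr (M \<Otimes>\<^sub>M N) N snd)"
  then have A': "A \<in> sets N" by simp
  have "emeasure (distr (M \<Otimes>\<^sub>M N) N snd) A = emeasure (M \<Otimes>\<^sub>M N) (space M \<times> A)"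
    using A' by (auto simp add: emeasure_distr space_pair_measure dest: sets.sets_into_space intro!: arg_cong2[where f=emeasure])
  also have "\<dots> = emeasure M (space M) * emeasure N A"
    using A' by (intro N.emeasure_pair_measure_Times) auto
  finally show "emeasure (distr (M \<Otimes>\<^sub>M N) N snd) A = emeasure N A"
    by (simp add: M.emeasure_space_1)
qed simp

lemma sq_dist_bound: "q2 (a, b) \<le> 2 * q1 a + 2 * q1 b"
proof -
  have "dist a b \<le> norm a + norm b" by (simp add: dist_norm norm_triangle_ineq4)
  then have "(dist a b)\<^sup>2 \<le> (norm a + norm b)\<^sup>2" by (intro power_mono) auto
  also have "\<dots> \<le> 2 * (norm a)\<^sup>2 + 2 * (norm b)\<^sup>2" by (rule sq_sum_le)
  finally show ?thesis by (simp add: q1_def q2_def)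
qed

lemma prod_coupling:
  assumes R: "rho \<in> W2space" and V: "nu \<in> W2space"
  shows "rho \<Otimes>\<^sub>M nu \<in> couplings rho nu" "(\<integral>\<^sup>+p. ennreal (q2 p) \<partial>(rho \<Otimes>\<^sub>M nu)) < \<infinity>"
proof -
  have sR: "sets rho = sets (borel :: pt measure)" and pR: "prob_space rho" and fR: "(\<integral>\<^sup>+x. ennreal (q1 x) \<partial>rho) < \<infinity>"
    using R by (auto simp: W2space_iff)
  have sV: "sets nu = sets (borel :: pt measure)" and pV: "prob_space nu" and fV: "(\<integral>\<^sup>+x. ennreal (q1 x) \<partial>nu) < \<infinity>"
    using V by (auto simp: W2space_iff)
  interpret V: prob_space nu by (rule pV)
  have sP: "sets (rho \<Otimes>\<^sub>M nu) = sets (borel :: (pt \<times> pt) measure)"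
  proof -
    have "sets (rho \<Otimes>\<^sub>M nu) = sets (borel \<Otimes>\<^sub>M (borel :: pt measure))" by (intro sets_pair_measure_cong sR sV)
    then show ?thesis by (simp only: borel_prod)
  qed
  have pP: "prob_space (rho \<Otimes>\<^sub>M nu)" by (intro prob_space_pair pR pV)
  have d1: "distr (rho \<Otimes>\<^sub>M nu) borel fst = rho"
  proof -
    have "distr (rho \<Otimes>\<^sub>M nu) borel fst = distr (rho \<Otimes>\<^sub>M nu) rho fst"
      by (rule distr_cong) (auto simp: sR)
    also have "\<dots> = rho" by (rule V.distr_pair_fst)
    finally show ?thesis .
  qed
  have d2: "distr (rho \<Otimes>\<^sub>M nu) borel snd = nu"
  proof -
    have "distr (rho \<Otimes>\<^sub>M nu) borel snd = distr (rho \<Otimes>\<^sub>M nu) nu snd"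
      by (rule distr_cong) (auto simp: sV)
    also have "\<dots> = nu" by (rule distr_pair_snd'[OF pR pV])
    finally show ?thesis .
  qed
  show "rho \<Otimes>\<^sub>M nu \<in> couplings rho nu"
    unfolding couplings_def using sP pP d1 d2 by auto
  have mf: "fst \<in> measurable (rho \<Otimes>\<^sub>M nu) (borel :: pt measure)" by (rule meas_from_borel[OF sP]) measurable
  have ms: "snd \<in> measurable (rho \<Otimes>\<^sub>M nu) (borel :: pt measure)" by (rule meas_from_borel[OF sP]) measurable
  have mq: "(\<lambda>x. ennreal (2 * q1 x)) \<in> borel_measurable (borel :: pt measure)" by measurable
  have i1: "(\<integral>\<^sup>+p. ennreal (2 * q1 (fst p)) \<partial>(rho \<Otimes>\<^sub>M nu)) = (\<integral>\<^sup>+x. ennreal (2 * q1 x) \<partial>rho)"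
    using nn_integral_distr[OF mf, of "\<lambda>x. ennreal (2 * q1 x)"] meas_from_borel[OF sR mq] by (simp add: d1)
  have i2: "(\<integral>\<^sup>+p. ennreal (2 * q1 (snd p)) \<partial>(rho \<Otimes>\<^sub>M nu)) = (\<integral>\<^sup>+x. ennreal (2 * q1 x) \<partial>nu)"
    using nn_integral_distr[OF ms, of "\<lambda>x. ennreal (2 * q1 x)"] meas_from_borel[OF sV mq] by (simp add: d2)
  have f1: "(\<integral>\<^sup>+x. ennreal (2 * q1 x) \<partial>rho) < \<infinity>"
  proof -
    have m: "(\<lambda>x. ennreal (q1 x)) \<in> borel_measurable rho" by (rule meas_from_borel[OF sR]) measurable
    have "(\<integral>\<^sup>+x. ennreal (2 * q1 x) \<partial>rho) = (\<integral>\<^sup>+x. 2 * ennreal (q1 x) \<partial>rho)"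
      by (intro nn_integral_cong) (simp add: ennreal_mult q1_def)
    also have "\<dots> = 2 * (\<integral>\<^sup>+x. ennreal (q1 x) \<partial>rho)" by (rule nn_integral_cmult[OF m])
    finally have "(\<integral>\<^sup>+x. ennreal (2 * q1 x) \<partial>rho) = 2 * (\<integral>\<^sup>+x. ennreal (q1 x) \<partial>rho)" .
    then show ?thesis using fR by (simp add: ennreal_mult_less_top)
  qed
  have f2: "(\<integral>\<^sup>+x. ennreal (2 * q1 x) \<partial>nu) < \<infinity>"
  proof -
    have m: "(\<lambda>x. ennreal (q1 x)) \<in> borel_measurable nu" by (rule meas_from_borel[OF sV]) measurable
    have "(\<integral>\<^sup>+x. ennreal (2 * q1 x) \<partial>nu) = (\<integral>\<^sup>+x. 2 * ennreal (q1 x) \<partial>nu)"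
      by (intro nn_integral_cong) (simp add: ennreal_mult q1_def)
    also have "\<dots> = 2 * (\<integral>\<^sup>+x. ennreal (q1 x) \<partial>nu)" by (rule nn_integral_cmult[OF m])
    finally have "(\<integral>\<^sup>+x. ennreal (2 * q1 x) \<partial>nu) = 2 * (\<integral>\<^sup>+x. ennreal (q1 x) \<partial>nu)" .
    then show ?thesis using fV by (simp add: ennreal_mult_less_top)
  qed
  have "(\<integral>\<^sup>+p. ennreal (q2 p) \<partial>(rho \<Otimes>\<^sub>M nu)) \<le> (\<integral>\<^sup>+p. ennreal (2 * q1 (fst p)) + ennreal (2 * q1 (snd p)) \<partial>(rho \<Otimes>\<^sub>M nu))"
  proof (intro nn_integral_mono)
    fix p :: "pt \<times> pt"
    have "q2 p \<le> 2 * q1 (fst p) + 2 * q1 (snd p)" using sq_dist_bound[of "fst p" "snd p"] by simp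
    then show "ennreal (q2 p) \<le> ennreal (2 * q1 (fst p)) + ennreal (2 * q1 (snd p))"
      by (simp add: ennreal_plus[symmetric] q1_def ennreal_leI del: ennreal_plus)
  qed
  also have "\<dots> = (\<integral>\<^sup>+p. ennreal (2 * q1 (fst p)) \<partial>(rho \<Otimes>\<^sub>M nu)) + (\<integral>\<^sup>+p. ennreal (2 * q1 (snd p)) \<partial>(rho \<Otimes>\<^sub>M nu))"
    by (rule nn_integral_add) (use measurable_compose[OF mf mq] measurable_compose[OF ms mq] in auto)
  also have "\<dots> < \<infinity>" using f1 f2 by (simp add: i1 i2)
  finally show "(\<integral>\<^sup>+p. ennreal (q2 p) \<partial>(rho \<Otimes>\<^sub>M nu)) < \<infinity>" .
qed

lemma LL2_coupling:
  assumes C: "C \<in> couplings rho nu"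
  shows "LL2 d t C \<in> couplings (LL d t rho) (LL d t nu)"
proof -
  have sC: "sets C = sets (borel :: (pt \<times> pt) measure)" and pC: "prob_space C"
    and m1: "distr C borel fst = rho" and m2: "distr C borel snd = nu"
    using C by (auto simp: couplings_def)
  show ?thesis unfolding couplings_def
    using LL2_prob[OF pC sC, of d t] LL2_fst[OF pC sC, of d t] LL2_snd[OF pC sC, of d t] m1 m2
    by (simp add: LL2_def)
qed

lemma cost_q2: "(\<integral>\<^sup>+p. ennreal ((dist (fst p) (snd p))\<^sup>2) \<partial>C) = (\<integral>\<^sup>+p. ennreal (q2 p) \<partial>C)"
  by (simp add: q2_def)

lemma W2sq_LL:
  assumes R: "rho \<in> W2space" and V: "nu \<in> W2space"
    and t0: "0 \<le> t" and t1: "t \<le> 1" and d0: "0 < d"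
  shows "W2sq (LL d t rho) (LL d t nu) \<le> ennreal (d/2) * W2sq rho nu"
proof -
  define k where "k = ennreal (d/2)"
  have k0: "k \<noteq> 0" and kt: "k < top" using d0 by (auto simp: k_def)
  define X where "X = W2sq (LL d t rho) (LL d t nu)"
  have step: "X \<le> k * (\<integral>\<^sup>+p. ennreal ((dist (fst p) (snd p))\<^sup>2) \<partial>C)" if C: "C \<in> couplings rho nu" for C
  proof -
    have sC: "sets C = sets (borel :: (pt \<times> pt) measure)" and pC: "prob_space C"
      using C by (auto simp: couplings_def)
    have "X \<le> (\<integral>\<^sup>+p. ennreal ((dist (fst p) (snd p))\<^sup>2) \<partial>LL2 d t C)"
      unfolding X_def W2sq_def by (rule INF_lower[OF LL2_coupling[OF C]])
    also have "\<dots> \<le> k * (\<integral>\<^sup>+p. ennreal ((dist (fst p) (snd p))\<^sup>2) \<partial>C)"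
      unfolding cost_q2 k_def by (rule LL2_cost[OF pC sC t0 t1]) (use d0 in simp)
    finally show ?thesis .
  qed
  have "X / k \<le> W2sq rho nu"
    unfolding W2sq_def
  proof (rule INF_greatest)
    fix C assume C: "C \<in> couplings rho nu"
    have "X / k = X * inverse k" by (simp add: divide_ennreal_def)
    also have "\<dots> \<le> k * (\<integral>\<^sup>+p. ennreal ((dist (fst p) (snd p))\<^sup>2) \<partial>C) * inverse k"
      by (rule mult_right_mono[OF step[OF C]]) simp
    also have "\<dots> = (\<integral>\<^sup>+p. ennreal ((dist (fst p) (snd p))\<^sup>2) \<partial>C) * (k / k)"
      by (simp add: divide_ennreal_def ac_simps)
    also have "\<dots> = (\<integral>\<^sup>+p. ennreal ((dist (fst p) (snd p))\<^sup>2) \<partial>C)"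
      using k0 kt by simp
    finally show "X / k \<le> (\<integral>\<^sup>+p. ennreal ((dist (fst p) (snd p))\<^sup>2) \<partial>C)" .
  qed
  then have "X / k * k \<le> W2sq rho nu * k" by (rule mult_right_mono) simp
  moreover have "X / k * k = X"
  proof -
    have "X / k * k = X * (k / k)" by (simp add: divide_ennreal_def ac_simps)
    then show ?thesis using k0 kt by simp
  qed
  ultimately show ?thesis by (simp add: X_def k_def mult.commute)
qed

lemma W2sq_fin:
  assumes R: "rho \<in> W2space" and V: "nu \<in> W2space"
  shows "W2sq rho nu < top"
proof -
  have "W2sq rho nu \<le> (\<integral>\<^sup>+p. ennreal ((dist (fst p) (snd p))\<^sup>2) \<partial>(rho \<Otimes>\<^sub>M nu))"
    unfolding W2sq_def by (rule INF_lower[OF prod_coupling(1)[OF R V]])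
  also have "\<dots> < top" unfolding cost_q2 using prod_coupling(2)[OF R V] by simp
  finally show ?thesis .
qed

theorem lemma8p1:
  fixes d t :: real
  assumes "0 < d" and "d < 2" and "0 \<le> t" and "t \<le> 1"
  shows "(\<forall>rho \<in> W2space. LL d t rho \<in> W2space) \<and>
    (\<exists>c < 1. \<forall>rho \<in> W2space. \<forall>nu \<in> W2space.
        W2 (LL d t rho) (LL d t nu) \<le> c * W2 rho nu)"
proof
  show "\<forall>rho \<in> W2space. LL d t rho \<in> W2space"
    using LL_W2 assms by auto
  show "\<exists>c < 1. \<forall>rho \<in> W2space. \<forall>nu \<in> W2space. W2 (LL d t rho) (LL d t nu) \<le> c * W2 rho nu"
  proof (intro exI conjI ballI)
    show "sqrt (d/2) < 1" using assms by simp
    fix rho nu assume R: "rho \<in> W2space" and V: "nu \<in> W2space"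
    have fin: "W2sq rho nu < top" by (rule W2sq_fin[OF R V])
    have le: "W2sq (LL d t rho) (LL d t nu) \<le> ennreal (d/2) * W2sq rho nu"
      by (rule W2sq_LL[OF R V assms(3,4,1)])
    have fin2: "ennreal (d/2) * W2sq rho nu < top" using fin by (simp add: ennreal_mult_less_top)
    have "enn2real (W2sq (LL d t rho) (LL d t nu)) \<le> enn2real (ennreal (d/2) * W2sq rho nu)"
      by (rule enn2real_mono[OF le fin2])
    also have "\<dots> = (d/2) * enn2real (W2sq rho nu)"
      using assms by (simp add: enn2real_mult)
    finally have "sqrt (enn2real (W2sq (LL d t rho) (LL d t nu))) \<le> sqrt ((d/2) * enn2real (W2sq rho nu))"
      by (rule real_sqrt_le_mono)
    also have "\<dots> = sqrt (d/2) * sqrt (enn2real (W2sq rho nu))" by (rule real_sqrt_mult)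
    finally show "W2 (LL d t rho) (LL d t nu) \<le> sqrt (d/2) * W2 rho nu"
      by (simp add: W2_def)
  qed
qed

end
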